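(* Let $A\in\mathrm{SL}(4,\mathbb{C})$ have characteristic polynomial $\chi_A(x)=x^4-c_3x^3+c_2x^2-c_1x+1$. If $c_3\neq\overline{c_1}$ or $c_2\notin\mathbb{R}$, then the characteristic polynomial of $A$ is not $c$-reciprocal. Suppose now that $c_3=\overline{c_1}$ and $c_2\in\mathbb{R}$. Then: (1) if the sequence $\{\operatorname{tr}(A^n)\}_{n\in\mathbb{N}}$ is bounded, then $A$ is $c$-reversible; (2) if this trace sequence is unbounded and the minimal polynomial of $A$ has degree different from $3$, then $A$ is $c$-reversible; (3) suppose the trace sequence is unbounded and the minimal polynomial of $A$ has degree $3$. (a) If $\operatorname{tr}(A)=x+iy$ with $x,y\in\mathbb{R}$, $x\neq 0$, $y\neq 0$, then $A$ is $c$-reversible. (b) If $\operatorname{tr}(A)\in\mathbb{R}$, then $A$ is $c$-reversible if and only if $c_2\neq \frac{c_3^2}{4}+2$; and if $\operatorname{tr}(A)$ is purely imaginary, then $A$ is $c$-reversible if and only if $c_2\neq\frac{c_3^2}{4}-2$.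
   Context: For a matrix $g$, $\overline{g}$ denotes its entrywise complex conjugate. $g\in\mathrm{SL}(n,\mathbb{C})$ is $c$-reversible if there exists $h\in\mathrm{SL}(n,\mathbb{C})$ with $hgh^{-1}=\overline{g}^{-1}$. A polynomial with nonzero roots is $c$-reciprocal if for every root $\lambda$, $\overline{\lambda}^{-1}$ is also a root with the same multiplicity. *)

theory Defs
  imports "Jordan_Normal_Form.Jordan_Normal_Form" "HOL-Computational_Algebra.Polynomial"
begin

definition SL_mat :: "nat \<Rightarrow> complex mat set" where
  "SL_mat n = {A. A \<in> carrier_mat n n \<and> det A = 1}"

definition conj_mat :: "complex mat \<Rightarrow> complex mat" where
  "conj_mat A = map_mat cnj A"

definition is_inv_mat :: "nat \<Rightarrow> complex mat \<Rightarrow> complex mat \<Rightarrow> bool" where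
  "is_inv_mat n B A \<longleftrightarrow> A \<in> carrier_mat n n \<and> B \<in> carrier_mat n n \<and> A * B = 1\<^sub>m n \<and> B * A = 1\<^sub>m n"

definition c_reversible :: "nat \<Rightarrow> complex mat \<Rightarrow> bool" where
  "c_reversible n g \<longleftrightarrow>
     (\<exists>h hinv ginv. h \<in> SL_mat n \<and> is_inv_mat n hinv h \<and> is_inv_mat n ginv (conj_mat g)
        \<and> h * g * hinv = ginv)"

definition c_reciprocal :: "complex poly \<Rightarrow> bool" where
  "c_reciprocal p \<longleftrightarrow>
     (\<forall>z. poly p z = 0 \<longrightarrow> poly p (inverse (cnj z)) = 0 \<and> order (inverse (cnj z)) p = order z p)"

definition poly_mat :: "nat \<Rightarrow> complex poly \<Rightarrow> complex mat \<Rightarrow> complex mat" where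
  "poly_mat n p A = fold_coeffs (\<lambda>a M. a \<cdot>\<^sub>m 1\<^sub>m n + A * M) p (0\<^sub>m n n)"

definition mat_trace :: "complex mat \<Rightarrow> complex" where
  "mat_trace A = (\<Sum>i<dim_row A. A $$ (i, i))"

definition is_minimal_poly :: "nat \<Rightarrow> complex mat \<Rightarrow> complex poly \<Rightarrow> bool" where
  "is_minimal_poly n A p \<longleftrightarrow> monic p \<and> poly_mat n p A = 0\<^sub>m n n \<and>
     (\<forall>q. q \<noteq> 0 \<and> poly_mat n q A = 0\<^sub>m n n \<longrightarrow> degree p \<le> degree q)"

definition minimal_poly :: "nat \<Rightarrow> complex mat \<Rightarrow> complex poly" where
  "minimal_poly n A = (THE p. is_minimal_poly n A p)"

end

theory Submission
  imports Defs "Jordan_Normal_Form.Jordan_Normal_Form_Uniqueness" "Jordan_Normal_Form.Jordan_Normal_Form_Existence"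
begin

lemma poly_mat_0[simp]: "poly_mat n 0 A = 0\<^sub>m n n"
  unfolding poly_mat_def by simp

lemma poly_mat_pCons: assumes A: "A \<in> carrier_mat n n"
  shows "poly_mat n (pCons a p) A = a \<cdot>\<^sub>m 1\<^sub>m n + A * poly_mat n p A"
proof (cases "p = 0 \<and> a = 0")
  case True
  then show ?thesis using A by (auto simp: poly_mat_def intro!: eq_matI)
next
  case False
  then have "coeffs (pCons a p) = a # coeffs p"
    by (auto simp: coeffs_pCons_eq_cCons cCons_def)
  then show ?thesis unfolding poly_mat_def fold_coeffs_def by simp
qed

lemma poly_mat_carrier[simp]: assumes A: "A \<in> carrier_mat n n"
  shows "poly_mat n p A \<in> carrier_mat n n"
  by (induct p rule: pCons_induct, simp, subst poly_mat_pCons[OF A], insert A, auto)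

lemma poly_mat_dims[simp]: assumes A: "A \<in> carrier_mat n n"
  shows "dim_row (poly_mat n p A) = n" "dim_col (poly_mat n p A) = n"
  using poly_mat_carrier[OF A, of p] by auto

lemma poly_mat_add: assumes A: "A \<in> carrier_mat n n"
  shows "poly_mat n (p + q) A = poly_mat n p A + poly_mat n q A"
proof (induct p q rule: poly_induct2)
  fix a p b q assume IH: "poly_mat n (p + q) A = poly_mat n p A + poly_mat n q A"
  have P: "poly_mat n p A \<in> carrier_mat n n" "poly_mat n q A \<in> carrier_mat n n" using A by auto
  have "poly_mat n (pCons a p + pCons b q) A = poly_mat n (pCons (a+b) (p+q)) A" by simp
  also have "\<dots> = (a+b) \<cdot>\<^sub>m 1\<^sub>m n + A * (poly_mat n p A + poly_mat n q A)"
    unfolding poly_mat_pCons[OF A] IH ..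
  also have "\<dots> = (a \<cdot>\<^sub>m 1\<^sub>m n + A * poly_mat n p A) + (b \<cdot>\<^sub>m 1\<^sub>m n + A * poly_mat n q A)"
    using A P by (subst mult_add_distrib_mat[of _ n n], auto intro!: eq_matI simp: algebra_simps)
  finally show "poly_mat n (pCons a p + pCons b q) A = poly_mat n (pCons a p) A + poly_mat n (pCons b q) A"
    unfolding poly_mat_pCons[OF A] .
qed simp

lemma poly_mat_smult: assumes A: "A \<in> carrier_mat n n"
  shows "poly_mat n (Polynomial.smult c p) A = c \<cdot>\<^sub>m poly_mat n p A"
proof (induct p rule: pCons_induct)
  case (pCons a p)
  have P: "poly_mat n p A \<in> carrier_mat n n" using A by auto
  show ?case unfolding smult_pCons poly_mat_pCons[OF A] pCons
    using A P by (subst mult_smult_distrib[of _ n n _ n], auto intro!: eq_matI simp: algebra_simps)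
qed simp

lemma poly_mat_uminus: assumes A: "A \<in> carrier_mat n n"
  shows "poly_mat n (- p) A = - poly_mat n p A"
proof -
  have "- p = Polynomial.smult (-1) p" by simp
  then show ?thesis using poly_mat_smult[OF A, of "-1" p] A by (auto intro!: eq_matI)
qed

lemma poly_mat_diff: assumes A: "A \<in> carrier_mat n n"
  shows "poly_mat n (p - q) A = poly_mat n p A - poly_mat n q A"
proof -
  have "p - q = p + (- q)" by simp
  then show ?thesis using poly_mat_add[OF A, of p "-q"] poly_mat_uminus[OF A, of q] A
    by (auto intro!: eq_matI)
qed

lemma poly_mat_mult: assumes A: "A \<in> carrier_mat n n"
  shows "poly_mat n (p * q) A = poly_mat n p A * poly_mat n q A"
proof (induct p rule: pCons_induct)
  case 0
  then show ?case using A by (auto intro!: eq_matI)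
next
  case (pCons a p)
  have P: "poly_mat n p A \<in> carrier_mat n n" "poly_mat n q A \<in> carrier_mat n n" using A by auto
  have "poly_mat n (pCons a p * q) A = poly_mat n (Polynomial.smult a q + pCons 0 (p * q)) A" by simp
  also have "\<dots> = a \<cdot>\<^sub>m poly_mat n q A + A * (poly_mat n p A * poly_mat n q A)"
    unfolding poly_mat_add[OF A] poly_mat_smult[OF A] poly_mat_pCons[OF A] pCons
    using A P by (intro eq_matI, auto)
  also have "\<dots> = (a \<cdot>\<^sub>m 1\<^sub>m n + A * poly_mat n p A) * poly_mat n q A"
    using A by (subst add_mult_distrib_mat[of _ n n], auto simp: assoc_mult_mat[of _ n n _ n _ n])
  finally show ?case unfolding poly_mat_pCons[OF A] .
qed

lemma poly_mat_const: assumes A: "A \<in> carrier_mat n n"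
  shows "poly_mat n [:c:] A = c \<cdot>\<^sub>m 1\<^sub>m n"
  using poly_mat_pCons[OF A, of c 0] A by (auto intro!: eq_matI)

lemma poly_mat_linear: assumes A: "A \<in> carrier_mat n n"
  shows "poly_mat n [:-c, 1:] A = char_matrix A c"
  unfolding poly_mat_pCons[OF A] poly_mat_const[OF A] char_matrix_def
  using A by (intro eq_matI, auto)

lemma poly_mat_power: assumes A: "A \<in> carrier_mat n n"
  shows "poly_mat n (p ^ k) A = (poly_mat n p A) ^\<^sub>m k"
proof (induct k)
  case 0
  then show ?case using poly_mat_const[OF A, of 1] A by (auto simp: one_pCons intro!: eq_matI)
next
  case (Suc k)
  have "poly_mat n (p ^ Suc k) A = poly_mat n (p ^ k * p) A" by (simp add: mult.commute)
  then show ?case unfolding poly_mat_mult[OF A] Suc by simp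
qed

lemma poly_mat_vec: assumes A: "A \<in> carrier_mat n n" and v: "v \<in> carrier_vec n"
  and ev: "A *\<^sub>v v = a \<cdot>\<^sub>v v"
  shows "poly_mat n p A *\<^sub>v v = poly p a \<cdot>\<^sub>v v"
proof (induct p rule: pCons_induct)
  case 0
  then show ?case using v by (auto)
next
  case (pCons c p)
  have "poly_mat n (pCons c p) A *\<^sub>v v = c \<cdot>\<^sub>v v + A *\<^sub>v (poly_mat n p A *\<^sub>v v)"
    unfolding poly_mat_pCons[OF A] using A v
    by (subst add_mult_distrib_mat_vec[of _ n n], auto simp: assoc_mult_mat_vec[of _ n n _ n])
  also have "\<dots> = c \<cdot>\<^sub>v v + (poly p a * a) \<cdot>\<^sub>v v" unfolding pCons using A v ev
    by (auto simp: mult_mat_vec smult_smult_assoc)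
  also have "\<dots> = poly (pCons c p) a \<cdot>\<^sub>v v" using v by (auto simp: algebra_simps)
  finally show ?case .
qed

lemma poly_mat_vec2: assumes A: "A \<in> carrier_mat n n" and v: "v \<in> carrier_vec n"
  and w: "w \<in> carrier_vec n"
  and ev: "A *\<^sub>v v = a \<cdot>\<^sub>v v" and ew: "A *\<^sub>v w = a \<cdot>\<^sub>v w + v"
  shows "poly_mat n p A *\<^sub>v w = poly p a \<cdot>\<^sub>v w + poly (pderiv p) a \<cdot>\<^sub>v v"
proof (induct p rule: pCons_induct)
  case 0
  then show ?case using v w by (auto intro!: eq_vecI)
next
  case (pCons c p)
  have "poly_mat n (pCons c p) A *\<^sub>v w = c \<cdot>\<^sub>v w + A *\<^sub>v (poly_mat n p A *\<^sub>v w)"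
    unfolding poly_mat_pCons[OF A] using A w
    by (subst add_mult_distrib_mat_vec[of _ n n], auto simp: assoc_mult_mat_vec[of _ n n _ n])
  also have "\<dots> = c \<cdot>\<^sub>v w + A *\<^sub>v (poly p a \<cdot>\<^sub>v w + poly (pderiv p) a \<cdot>\<^sub>v v)" unfolding pCons ..
  also have "\<dots> = c \<cdot>\<^sub>v w + (poly p a \<cdot>\<^sub>v (A *\<^sub>v w) + poly (pderiv p) a \<cdot>\<^sub>v (A *\<^sub>v v))"
    using A v w by (subst mult_add_distrib_mat_vec[of _ n n], auto simp: mult_mat_vec)
  also have "\<dots> = c \<cdot>\<^sub>v w + (poly p a \<cdot>\<^sub>v (a \<cdot>\<^sub>v w + v) + poly (pderiv p) a \<cdot>\<^sub>v (a \<cdot>\<^sub>v v))"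
    unfolding ev ew ..
  also have "\<dots> = poly (pCons c p) a \<cdot>\<^sub>v w + poly (pderiv (pCons c p)) a \<cdot>\<^sub>v v"
    using v w by (intro eq_vecI, auto simp: pderiv_pCons algebra_simps)
  finally show ?case .
qed

lemma poly_mat_similar: assumes wit: "similar_mat_wit A B P Q" and A: "A \<in> carrier_mat n n"
  shows "poly_mat n p A = P * poly_mat n p B * Q"
proof -
  from similar_mat_witD2[OF A wit] have PQ: "P * Q = 1\<^sub>m n" and QP: "Q * P = 1\<^sub>m n"
    and AB: "A = P * B * Q" and B: "B \<in> carrier_mat n n" and P: "P \<in> carrier_mat n n"
    and Q: "Q \<in> carrier_mat n n" by auto
  show ?thesis
  proof (induct p rule: pCons_induct)
    case 0
    then show ?case using P Q by auto
  next
    case (pCons c p)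
    define M where "M = poly_mat n p B"
    have M: "M \<in> carrier_mat n n" using B unfolding M_def by auto
    have "poly_mat n (pCons c p) A = c \<cdot>\<^sub>m 1\<^sub>m n + (P * B * Q) * (P * M * Q)"
      unfolding poly_mat_pCons[OF A] pCons M_def AB[symmetric] ..
    also have "(P * B * Q) * (P * M * Q) = P * (B * M) * Q"
    proof -
      have "(P * B * Q) * (P * M * Q) = P * B * (Q * P) * M * Q"
        using P B Q M by (simp add: assoc_mult_mat[of _ n n _ n _ n])
      also have "\<dots> = P * (B * M) * Q" unfolding QP using P B Q M
        by (simp add: assoc_mult_mat[of _ n n _ n _ n])
      finally show ?thesis .
    qed
    also have "c \<cdot>\<^sub>m 1\<^sub>m n = P * (c \<cdot>\<^sub>m 1\<^sub>m n) * Q"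
      using P Q PQ by (metis mult_smult_assoc_mat mult_smult_distrib one_carrier_mat right_mult_one_mat)
    also have "P * (c \<cdot>\<^sub>m 1\<^sub>m n) * Q + P * (B * M) * Q = P * (c \<cdot>\<^sub>m 1\<^sub>m n + B * M) * Q"
    proof -
      have C: "c \<cdot>\<^sub>m 1\<^sub>m n \<in> carrier_mat n n" "B * M \<in> carrier_mat n n" using B M by auto
      have "P * (c \<cdot>\<^sub>m 1\<^sub>m n + B * M) = P * (c \<cdot>\<^sub>m 1\<^sub>m n) + P * (B * M)"
        by (rule mult_add_distrib_mat[OF P C])
      moreover have "(P * (c \<cdot>\<^sub>m 1\<^sub>m n) + P * (B * M)) * Q = P * (c \<cdot>\<^sub>m 1\<^sub>m n) * Q + P * (B * M) * Q"
        by (rule add_mult_distrib_mat[OF _ _ Q], insert P C, auto)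
      ultimately show ?thesis by simp
    qed
    finally show ?case unfolding poly_mat_pCons[OF B] M_def .
  qed
qed

lemma poly_mat_four_block: assumes A: "A \<in> carrier_mat n1 n1" and B: "B \<in> carrier_mat n2 n2"
  shows "poly_mat (n1 + n2) p (four_block_mat A (0\<^sub>m n1 n2) (0\<^sub>m n2 n1) B)
    = four_block_mat (poly_mat n1 p A) (0\<^sub>m n1 n2) (0\<^sub>m n2 n1) (poly_mat n2 p B)"
proof (induct p rule: pCons_induct)
  case 0
  then show ?case by (intro eq_matI, auto)
next
  case (pCons c p)
  let ?F = "four_block_mat A (0\<^sub>m n1 n2) (0\<^sub>m n2 n1) B"
  have F: "?F \<in> carrier_mat (n1+n2) (n1+n2)" using A B by auto
  have PA: "poly_mat n1 p A \<in> carrier_mat n1 n1" and PB: "poly_mat n2 p B \<in> carrier_mat n2 n2"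
    using A B by auto
  have "poly_mat (n1 + n2) (pCons c p) ?F = c \<cdot>\<^sub>m 1\<^sub>m (n1+n2) + ?F * 
     four_block_mat (poly_mat n1 p A) (0\<^sub>m n1 n2) (0\<^sub>m n2 n1) (poly_mat n2 p B)"
    unfolding poly_mat_pCons[OF F] pCons ..
  also have "?F * four_block_mat (poly_mat n1 p A) (0\<^sub>m n1 n2) (0\<^sub>m n2 n1) (poly_mat n2 p B)
    = four_block_mat (A * poly_mat n1 p A) (0\<^sub>m n1 n2) (0\<^sub>m n2 n1) (B * poly_mat n2 p B)"
    by (subst mult_four_block_mat[OF A _ _ B PA _ _ PB], insert A B PA PB, auto)
  also have "c \<cdot>\<^sub>m 1\<^sub>m (n1+n2) + \<dots> = four_block_mat (c \<cdot>\<^sub>m 1\<^sub>m n1 + A * poly_mat n1 p A) (0\<^sub>m n1 n2) (0\<^sub>m n2 n1) (c \<cdot>\<^sub>m 1\<^sub>m n2 + B * poly_mat n2 p B)"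
    using A B PA PB by (intro eq_matI, auto)
  finally show ?case unfolding poly_mat_pCons[OF A] poly_mat_pCons[OF B] .
qed


lemma poly_mat_jordan_block_0: assumes dvd: "[:-c,1:]^k dvd q"
  shows "poly_mat k q (jordan_block k c) = 0\<^sub>m k k"
proof -
  from dvd obtain r where q: "q = [:-c,1:]^k * r" by (auto elim: dvdE)
  have J: "jordan_block k c \<in> carrier_mat k k" by simp
  have "poly_mat k ([:-c,1:]^k) (jordan_block k c) = (jordan_block k (0::complex)) ^\<^sub>m k"
    unfolding poly_mat_power[OF J] poly_mat_linear[OF J] char_matrix_jordan_block by simp
  also have "\<dots> = 0\<^sub>m k k" unfolding jordan_block_zero_pow by (intro eq_matI, auto)
  finally show ?thesis unfolding q poly_mat_mult[OF J] using poly_mat_carrier[OF J, of r] by simp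
qed

lemma poly_mat_jordan_matrix_0: assumes "\<And> k c. (k,c) \<in> set n_as \<Longrightarrow> [:-c,1:]^k dvd q"
  shows "poly_mat (sum_list (map fst n_as)) q (jordan_matrix n_as) = 0\<^sub>m (sum_list (map fst n_as)) (sum_list (map fst n_as))"
  using assms
proof (induct n_as)
  case Nil
  then show ?case unfolding jordan_matrix_def by (auto intro!: eq_matI)
next
  case (Cons kc n_as)
  obtain k c where kc: "kc = (k,c)" by force
  let ?m = "sum_list (map fst n_as)"
  have IH: "poly_mat ?m q (jordan_matrix n_as) = 0\<^sub>m ?m ?m" using Cons by auto
  have J0: "poly_mat k q (jordan_block k c) = 0\<^sub>m k k" 
    by (rule poly_mat_jordan_block_0, insert Cons(2)[of k c], auto simp: kc)
  show ?case unfolding kc jordan_matrix_Cons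
    by (simp, subst poly_mat_four_block, auto simp: IH J0 intro!: eq_matI)
qed

lemma poly_mat_jnf_0: assumes A: "A \<in> carrier_mat n n" and jnf: "jordan_nf A n_as"
  and dvd: "\<And> k c. (k,c) \<in> set n_as \<Longrightarrow> [:-c,1:]^k dvd q"
  shows "poly_mat n q A = 0\<^sub>m n n"
proof -
  from jnf[unfolded jordan_nf_def similar_mat_def] obtain P Q where
    wit: "similar_mat_wit A (jordan_matrix n_as) P Q" by auto
  from similar_mat_witD2[OF A wit] have J: "jordan_matrix n_as \<in> carrier_mat n n"
    and P: "P \<in> carrier_mat n n" and Q: "Q \<in> carrier_mat n n" by auto
  then have n: "sum_list (map fst n_as) = n" by auto
  show ?thesis unfolding poly_mat_similar[OF wit A] using poly_mat_jordan_matrix_0[of n_as q, OF dvd, unfolded n] P Q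
    by simp
qed


lemma monic_diff_degree: assumes "lead_coeff (p :: complex poly) = 1" "lead_coeff q = 1"
  and "degree p = degree q" and "p - q \<noteq> 0"
shows "degree (p - q) < degree p"
proof -
  have le: "degree (p - q) \<le> degree p" using assms by (simp add: degree_diff_le)
  have "coeff (p - q) (degree p) = 0" using assms by simp
  moreover have "coeff (p - q) (degree (p - q)) \<noteq> 0" using assms(4) leading_coeff_neq_0 by blast
  ultimately have "degree (p - q) \<noteq> degree p" by metis
  with le show ?thesis by simp
qed

lemma minimal_poly_exists: assumes A: "A \<in> carrier_mat n n" and q: "q \<noteq> 0" "poly_mat n q A = 0\<^sub>m n n"
  shows "is_minimal_poly n A (minimal_poly n A)"
proof -
  let ?P = "\<lambda> d. \<exists> q. q \<noteq> 0 \<and> poly_mat n q A = 0\<^sub>m n n \<and> degree q = d"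
  define d where "d = (LEAST d. ?P d)"
  have "?P (degree q)" using q by auto
  then have "?P d" unfolding d_def by (rule LeastI)
  then obtain q0 where q0: "q0 \<noteq> 0" "poly_mat n q0 A = 0\<^sub>m n n" "degree q0 = d" by auto
  have dmin: "d \<le> degree r" if "r \<noteq> 0" "poly_mat n r A = 0\<^sub>m n n" for r
    unfolding d_def by (rule Least_le, insert that, auto)
  define p0 where "p0 = Polynomial.smult (inverse (lead_coeff q0)) q0"
  have lc: "lead_coeff q0 \<noteq> 0" using q0 by auto
  have p0: "lead_coeff p0 = 1" "degree p0 = d" "poly_mat n p0 A = 0\<^sub>m n n"
    unfolding p0_def using lc q0 A by (auto simp: poly_mat_smult)
  have min0: "is_minimal_poly n A p0" unfolding is_minimal_poly_def using p0 dmin by auto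
  have uniq: "p = p0" if p: "is_minimal_poly n A p" for p
  proof (rule ccontr)
    assume ne: "p \<noteq> p0"
    from p[unfolded is_minimal_poly_def] have p1: "lead_coeff p = 1" "poly_mat n p A = 0\<^sub>m n n"
      and pmin: "\<And> r. r \<noteq> 0 \<Longrightarrow> poly_mat n r A = 0\<^sub>m n n \<Longrightarrow> degree p \<le> degree r" by auto
    have "p \<noteq> 0" using p1 by auto
    then have "d \<le> degree p" using dmin p1 by auto
    moreover have "p0 \<noteq> 0" using p0 by auto
    then have "degree p \<le> d" using pmin[of p0] p0 by auto
    ultimately have deg: "degree p = degree p0" using p0 by auto
    have r: "p - p0 \<noteq> 0" using ne by auto
    have "poly_mat n (p - p0) A = 0\<^sub>m n n" unfolding poly_mat_diff[OF A] p1 p0 by auto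
    then have "degree p \<le> degree (p - p0)" using pmin[OF r] by auto
    with monic_diff_degree[OF p1(1) p0(1) deg r] show False by auto
  qed
  have "minimal_poly n A = p0" unfolding minimal_poly_def
    by (rule the_equality[of "is_minimal_poly n A", OF min0 uniq])
  with min0 show ?thesis by simp
qed

lemma minimal_polyD: assumes "is_minimal_poly n A p"
  shows "p \<noteq> 0" "poly_mat n p A = 0\<^sub>m n n" "\<And> q. q \<noteq> 0 \<Longrightarrow> poly_mat n q A = 0\<^sub>m n n \<Longrightarrow> degree p \<le> degree q"
  using assms unfolding is_minimal_poly_def by auto


lemma char_matrix_mult_vec: assumes A: "A \<in> carrier_mat n n" and v: "v \<in> carrier_vec n"
  shows "char_matrix A c *\<^sub>v v = A *\<^sub>v v - c \<cdot>\<^sub>v v"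
  unfolding char_matrix_def using A v by (intro eq_vecI, auto simp: add_mult_distrib_mat_vec[of _ n n] algebra_simps)

lemma zero_mat_mult_vec[simp]: "v \<in> carrier_vec n \<Longrightarrow> 0\<^sub>m m n *\<^sub>v v = 0\<^sub>v m"
  by (intro eq_vecI, auto simp: scalar_prod_def)

lemma smult_vec_zero_imp: assumes "(a :: complex) \<cdot>\<^sub>v v = 0\<^sub>v n" "v \<in> carrier_vec n" "v \<noteq> 0\<^sub>v n"
  shows "a = 0"
proof -
  from assms(2,3) obtain i where i: "i < n" "v $ i \<noteq> 0" by (metis eq_vecI carrier_vecD index_zero_vec)
  from arg_cong[OF assms(1), of "\<lambda> w. w $ i"] i assms(2) have "a * v $ i = 0" by auto
  with i show ?thesis by auto
qed

lemma kernel_dim_eqI: assumes "mat_kernel X = mat_kernel Y" "dim_col X = dim_col Y"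
  shows "kernel_dim X = kernel_dim Y"
  unfolding kernel_dim_def using assms by simp

lemma annihilator_root: assumes A: "A \<in> carrier_mat n n" and q: "poly_mat n q A = 0\<^sub>m n n"
  and root: "poly (char_poly A) c = 0"
  shows "poly q c = 0"
proof -
  from root eigenvalue_root_char_poly[OF A] obtain v where ev: "eigenvector A v c"
    unfolding eigenvalue_def by auto
  then have v: "v \<in> carrier_vec n" "v \<noteq> 0\<^sub>v n" "A *\<^sub>v v = c \<cdot>\<^sub>v v" 
    unfolding eigenvector_def using A by auto
  from poly_mat_vec[OF A v(1) v(3), of q] q v have "poly q c \<cdot>\<^sub>v v = 0\<^sub>v n" by auto
  with v show ?thesis by (metis smult_vec_zero_imp)
qed

lemma annihilator_double_root: assumes A: "A \<in> carrier_mat n n" and q: "poly_mat n q A = 0\<^sub>m n n"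
  and d: "dim_gen_eigenspace A c 1 \<noteq> dim_gen_eigenspace A c 2"
  shows "poly q c = 0 \<and> poly (pderiv q) c = 0"
proof -
  let ?M = "char_matrix A c"
  have M: "?M \<in> carrier_mat n n" using A by auto
  have M1: "?M ^\<^sub>m 1 = ?M" using M by simp
  have M2: "?M ^\<^sub>m 2 = ?M * ?M" using M by (simp add: numeral_2_eq_2)
  have sub: "mat_kernel ?M \<subseteq> mat_kernel (?M ^\<^sub>m 2)" unfolding M2 by (rule mat_kernel_mult_subset[OF M M])
  have "mat_kernel ?M \<noteq> mat_kernel (?M ^\<^sub>m 2)"
  proof
    assume "mat_kernel ?M = mat_kernel (?M ^\<^sub>m 2)"
    then have "kernel_dim (?M ^\<^sub>m 1) = kernel_dim (?M ^\<^sub>m 2)" unfolding M1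
      by (intro kernel_dim_eqI, insert M, auto)
    with d show False unfolding dim_gen_eigenspace_def by simp
  qed
  with sub obtain w where w2: "w \<in> mat_kernel (?M * ?M)" and w1: "w \<notin> mat_kernel ?M"
    unfolding M2 by auto
  have MM: "?M * ?M \<in> carrier_mat n n" using M by auto
  from mat_kernelD[OF MM w2] have w: "w \<in> carrier_vec n" and Mw: "?M * ?M *\<^sub>v w = 0\<^sub>v n" by auto
  define v where "v = ?M *\<^sub>v w"
  have v: "v \<in> carrier_vec n" unfolding v_def using M w by auto
  have v0: "v \<noteq> 0\<^sub>v n" using w1 mat_kernelI[OF M w] unfolding v_def by auto
  have Mv: "?M *\<^sub>v v = 0\<^sub>v n" unfolding v_def using Mw M w by (simp add: assoc_mult_mat_vec[of _ n n _ n])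
  have Av: "A *\<^sub>v v = c \<cdot>\<^sub>v v" using Mv unfolding char_matrix_mult_vec[OF A v]
    using A v by (intro eq_vecI, auto simp: vec_eq_iff)
  have Aw: "A *\<^sub>v w = c \<cdot>\<^sub>v w + v" using v_def unfolding char_matrix_mult_vec[OF A w]
    using A w by (intro eq_vecI, auto)
  from poly_mat_vec[OF A v Av, of q] q v have "poly q c \<cdot>\<^sub>v v = 0\<^sub>v n" by auto
  with v v0 have q0: "poly q c = 0" by (metis smult_vec_zero_imp)
  from poly_mat_vec2[OF A v w Av Aw, of q] q w v q0 have "poly (pderiv q) c \<cdot>\<^sub>v v = 0\<^sub>v n" by auto
  with v v0 have "poly (pderiv q) c = 0" by (metis smult_vec_zero_imp)
  with q0 show ?thesis by auto
qed

lemma double_root_order: assumes "q \<noteq> 0" "poly q c = 0" "poly (pderiv (q :: complex poly)) c = 0"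
  shows "2 \<le> Polynomial.order c q"
proof -
  have "pderiv q \<noteq> 0"
  proof
    assume "pderiv q = 0"
    then have "degree q = 0" using pderiv_eq_0_iff by auto
    then obtain a where "q = [:a:]" using degree_eq_zeroE by blast
    with assms show False by auto
  qed
  then have "Polynomial.order c (pderiv q) \<noteq> 0" using assms order_root by blast
  then show ?thesis using order_pderiv[OF assms(1,2)] by simp
qed


lemma similar_four_block_swap: fixes A B :: "complex mat" assumes A: "A \<in> carrier_mat n1 n1" and B: "B \<in> carrier_mat n2 n2"
  shows "similar_mat (four_block_mat A (0\<^sub>m n1 n2) (0\<^sub>m n2 n1) B) (four_block_mat B (0\<^sub>m n2 n1) (0\<^sub>m n1 n2) A)"
proof -
  define P where "P = four_block_mat (0\<^sub>m n1 n2) (1\<^sub>m n1) (1\<^sub>m n2) (0\<^sub>m n2 n1 :: complex mat)"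
  define Q where "Q = four_block_mat (0\<^sub>m n2 n1) (1\<^sub>m n2) (1\<^sub>m n1) (0\<^sub>m n1 n2 :: complex mat)"
  let ?L = "four_block_mat A (0\<^sub>m n1 n2) (0\<^sub>m n2 n1) B"
  let ?R = "four_block_mat B (0\<^sub>m n2 n1) (0\<^sub>m n1 n2) A"
  have P: "P \<in> carrier_mat (n1+n2) (n2+n1)" unfolding P_def by auto
  have Q: "Q \<in> carrier_mat (n2+n1) (n1+n2)" unfolding Q_def by auto
  have PQ: "P * Q = 1\<^sub>m (n1 + n2)" unfolding P_def Q_def
    by (subst mult_four_block_mat[OF zero_carrier_mat one_carrier_mat one_carrier_mat zero_carrier_mat zero_carrier_mat one_carrier_mat one_carrier_mat zero_carrier_mat], auto intro!: eq_matI)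
  have QP: "Q * P = 1\<^sub>m (n1 + n2)" unfolding P_def Q_def
    by (subst mult_four_block_mat[OF zero_carrier_mat one_carrier_mat one_carrier_mat zero_carrier_mat zero_carrier_mat one_carrier_mat one_carrier_mat zero_carrier_mat], auto intro!: eq_matI)
  have PR: "P * ?R = four_block_mat (0\<^sub>m n1 n2) A B (0\<^sub>m n2 n1)" unfolding P_def
    by (subst mult_four_block_mat[OF zero_carrier_mat one_carrier_mat one_carrier_mat zero_carrier_mat B zero_carrier_mat zero_carrier_mat A], insert A B, auto intro!: eq_matI)
  have PRQ: "four_block_mat (0\<^sub>m n1 n2) A B (0\<^sub>m n2 n1) * Q = ?L" unfolding Q_def
    by (subst mult_four_block_mat[OF zero_carrier_mat A B zero_carrier_mat zero_carrier_mat one_carrier_mat one_carrier_mat zero_carrier_mat], insert A B, auto intro!: eq_matI)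
  show ?thesis
    by (rule similar_matI[of _ _ P Q "n1 + n2"], insert A B P Q PQ QP PR PRQ, auto)
qed

lemma four_block_mat_zero_0: assumes "X \<in> carrier_mat k k"
  shows "four_block_mat X (0\<^sub>m k 0) (0\<^sub>m 0 k) (0\<^sub>m 0 0) = X"
  using assms by (intro eq_matI, auto)

lemma jordan_matrix_two: "jordan_matrix [(n,a),(m,b)] = four_block_mat (jordan_block n a) (0\<^sub>m n m) (0\<^sub>m m n) (jordan_block m b)"
  unfolding jordan_matrix_Cons by (simp add: jordan_matrix_def four_block_mat_zero_0)

lemma similar_jordan_matrix_swap: fixes x y :: "nat \<times> complex" shows "similar_mat (jordan_matrix (x # y # zs)) (jordan_matrix (y # x # zs))"
proof -
  obtain n a where x: "x = (n,a)" by force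
  obtain m b where y: "y = (m,b)" by force
  have id: "\<And> x y. jordan_matrix (x # y # zs) = jordan_matrix (concat [[x,y], zs])" by simp
  let ?Z = "jordan_matrix zs"
  let ?k = "sum_list (map fst zs)"
  have Z: "?Z \<in> carrier_mat ?k ?k" by simp
  have sw: "similar_mat (jordan_matrix [x,y]) (jordan_matrix [y,x])"
    unfolding x y jordan_matrix_two by (rule similar_four_block_swap, auto)
  have "similar_mat (four_block_mat (jordan_matrix [x,y]) (0\<^sub>m (n+m) ?k) (0\<^sub>m ?k (n+m)) ?Z)
     (four_block_mat (jordan_matrix [y,x]) (0\<^sub>m (n+m) ?k) (0\<^sub>m ?k (n+m)) ?Z)"
    by (rule similar_mat_four_block_0_0[OF sw similar_mat_refl[OF Z]], insert x y, auto)
  moreover have "jordan_matrix (x # y # zs) = four_block_mat (jordan_matrix [x,y]) (0\<^sub>m (n+m) ?k) (0\<^sub>m ?k (n+m)) ?Z"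
    unfolding id jordan_matrix_concat_diag_block_mat using x y by (simp add: Let_def four_block_mat_zero_0)
  moreover have "jordan_matrix (y # x # zs) = four_block_mat (jordan_matrix [y,x]) (0\<^sub>m (n+m) ?k) (0\<^sub>m ?k (n+m)) ?Z"
    unfolding id jordan_matrix_concat_diag_block_mat using x y by (simp add: Let_def four_block_mat_zero_0 add.commute)
  ultimately show ?thesis by simp
qed

lemma similar_jordan_matrix_Cons: fixes xs ys :: "(nat \<times> complex) list" assumes "similar_mat (jordan_matrix xs) (jordan_matrix ys)"
  shows "similar_mat (jordan_matrix (x # xs)) (jordan_matrix (x # ys))"
proof -
  obtain n a where x: "x = (n,a)" by force
  from similar_matD[OF assms] obtain k where 
    c: "jordan_matrix xs \<in> carrier_mat k k" "jordan_matrix ys \<in> carrier_mat k k" by auto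
  then have s: "sum_list (map fst xs) = k" "sum_list (map fst ys) = k" by auto
  show ?thesis unfolding x jordan_matrix_Cons s
    by (rule similar_mat_four_block_0_0[OF similar_mat_refl assms], insert c, auto)
qed

lemma similar_jordan_matrix_move: fixes x :: "nat \<times> complex" shows "similar_mat (jordan_matrix (x # ys1 @ ys2)) (jordan_matrix (ys1 @ x # ys2))"
proof (induct ys1)
  case Nil
  then show ?case by (auto intro: similar_mat_refl[OF jordan_matrix_carrier])
next
  case (Cons y ys1)
  have "similar_mat (jordan_matrix (x # y # ys1 @ ys2)) (jordan_matrix (y # x # ys1 @ ys2))"
    by (rule similar_jordan_matrix_swap)
  moreover have "similar_mat (jordan_matrix (y # x # ys1 @ ys2)) (jordan_matrix (y # ys1 @ x # ys2))"
    by (rule similar_jordan_matrix_Cons[OF Cons])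
  ultimately show ?case by (simp add: similar_mat_trans)
qed

lemma similar_jordan_matrix_mset: fixes xs ys :: "(nat \<times> complex) list" shows "mset xs = mset ys \<Longrightarrow> similar_mat (jordan_matrix xs) (jordan_matrix ys)"
proof (induct xs arbitrary: ys)
  case Nil
  then show ?case by (auto intro: similar_mat_refl[OF jordan_matrix_carrier])
next
  case (Cons x xs)
  then have "x \<in> set ys" by (metis list.set_intros(1) set_mset_mset)
  then obtain ys1 ys2 where ys: "ys = ys1 @ x # ys2" by (meson split_list)
  with Cons(2) have "mset xs = mset (ys1 @ ys2)" by simp
  from similar_jordan_matrix_Cons[OF Cons(1)[OF this]]
  have "similar_mat (jordan_matrix (x # xs)) (jordan_matrix (x # ys1 @ ys2))" .
  from similar_mat_trans[OF this similar_jordan_matrix_move] show ?case unfolding ys .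
qed

lemma count_list_filter: "count_list xs x = length (filter ((=) x) xs)" 
  by (induct xs, auto)

lemma similar_by_dim_gen_eigenspace: fixes A B :: "complex mat"
  assumes A: "A \<in> carrier_mat n n" and B: "B \<in> carrier_mat n n"
  and eq: "\<And> ev k. dim_gen_eigenspace A ev k = dim_gen_eigenspace B ev k"
  shows "similar_mat A B"
proof -
  from char_poly_factorized[OF A] obtain as where "char_poly A = (\<Prod>a\<leftarrow>as. [:- a, 1:])" by auto
  from jordan_nf_exists[OF A this] obtain n_as where jA: "jordan_nf A n_as" ..
  from char_poly_factorized[OF B] obtain bs where "char_poly B = (\<Prod>a\<leftarrow>bs. [:- a, 1:])" by auto
  from jordan_nf_exists[OF B this] obtain m_bs where jB: "jordan_nf B m_bs" ..
  have cnr: "compute_nr_of_jordan_blocks A ev k = compute_nr_of_jordan_blocks B ev k" for ev k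
    unfolding compute_nr_of_jordan_blocks_def eq ..
  have "mset n_as = mset m_bs"
  proof (rule multiset_eqI)
    fix kev :: "nat \<times> complex"
    obtain k ev where kev: "kev = (k,ev)" by force
    show "count (mset n_as) kev = count (mset m_bs) kev"
    proof (cases "k = 0")
      case True
      then have "kev \<notin> set n_as" "kev \<notin> set m_bs" using jA jB unfolding jordan_nf_def kev by force+
      then show ?thesis by (metis count_eq_zero_iff set_mset_mset)
    next
      case False
      have "count (mset n_as) kev = length (filter ((=) (k,ev)) n_as)" unfolding kev count_mset count_list_filter ..
      also have "\<dots> = compute_nr_of_jordan_blocks A ev k" using compute_nr_of_jordan_blocks[OF jA False, of ev] by simp
      also have "\<dots> = compute_nr_of_jordan_blocks B ev k" by (rule cnr)
      also have "\<dots> = length (filter ((=) (k,ev)) m_bs)" using compute_nr_of_jordan_blocks[OF jB False, of ev] by simp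
      also have "\<dots> = count (mset m_bs) kev" unfolding kev count_mset count_list_filter ..
      finally show ?thesis .
    qed
  qed
  from similar_jordan_matrix_mset[OF this] jA jB show ?thesis unfolding jordan_nf_def
    using similar_mat_trans similar_mat_sym by blast
qed


lemma semiring_hom_cnj: "semiring_hom cnj" by (unfold_locales, auto)
lemma comm_ring_hom_cnj: "comm_ring_hom cnj" by (unfold_locales, auto)

lemma conj_mat_mult: assumes "A \<in> carrier_mat nr n" "B \<in> carrier_mat n nc"
  shows "conj_mat (A * B) = conj_mat A * conj_mat B"
  unfolding conj_mat_def by (rule semiring_hom.mat_hom_mult[OF semiring_hom_cnj assms])

lemma conj_mat_carrier[simp]: "A \<in> carrier_mat nr nc \<Longrightarrow> conj_mat A \<in> carrier_mat nr nc"
  unfolding conj_mat_def by auto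

lemma conj_mat_dims[simp]: "dim_row (conj_mat A) = dim_row A" "dim_col (conj_mat A) = dim_col A"
  unfolding conj_mat_def by auto

lemma conj_mat_one[simp]: "conj_mat (1\<^sub>m n) = 1\<^sub>m n"
  unfolding conj_mat_def by (intro eq_matI, auto)

lemma conj_mat_det: "det (conj_mat A) = cnj (det A)"
  unfolding conj_mat_def by (rule comm_ring_hom.hom_det[OF comm_ring_hom_cnj])

lemma similar_mat_conj: assumes "similar_mat A B" shows "similar_mat (conj_mat A) (conj_mat B)"
proof -
  from similar_matD[OF assms] obtain n P Q where c: "{A, B, P, Q} \<subseteq> carrier_mat n n" and 
    PQ: "P * Q = 1\<^sub>m n" "Q * P = 1\<^sub>m n" and AB: "A = P * B * Q" by auto
  show ?thesis
  proof (rule similar_matI[of _ _ "conj_mat P" "conj_mat Q" n])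
    show "conj_mat P * conj_mat Q = 1\<^sub>m n" using conj_mat_mult[of P n n Q n] c PQ by auto
    show "conj_mat Q * conj_mat P = 1\<^sub>m n" using conj_mat_mult[of Q n n P n] c PQ by auto
    show "conj_mat A = conj_mat P * conj_mat B * conj_mat Q" unfolding AB using c
      by (subst conj_mat_mult[of _ n n], force, force, subst conj_mat_mult[of _ n n], auto)
  qed (insert c, auto)
qed

lemma conj_jordan_block: "conj_mat (jordan_block k c) = jordan_block k (cnj c)"
  unfolding conj_mat_def by (intro eq_matI, auto)

lemma conj_jordan_matrix: "conj_mat (jordan_matrix n_as) = jordan_matrix (map (\<lambda> (k,c). (k, cnj c)) n_as)"
proof (induct n_as)
  case Nil
  then show ?case unfolding jordan_matrix_def conj_mat_def by (intro eq_matI, auto)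
next
  case (Cons kc n_as)
  obtain k c where kc: "kc = (k,c)" by force
  have s: "sum_list (map fst (map (\<lambda>(k, c). (k, cnj c)) n_as)) = sum_list (map fst n_as)"
    by (induct n_as, auto)
  show ?case unfolding kc jordan_matrix_Cons list.map prod.case s Cons[symmetric] conj_mat_def
    by (subst map_four_block_mat, auto simp: conj_jordan_block[unfolded conj_mat_def])
qed

lemma jordan_nf_conj: assumes "jordan_nf A n_as" 
  shows "jordan_nf (conj_mat A) (map (\<lambda> (k,c). (k, cnj c)) n_as)"
proof -
  have "fst ` set (map (\<lambda>(k,c). (k, cnj c)) n_as) = fst ` set n_as" by (induct n_as, auto)
  then show ?thesis using assms unfolding jordan_nf_def conj_jordan_matrix[symmetric]
    by (auto dest: similar_mat_conj)
qed

lemma dge_conj: fixes A :: "complex mat" assumes A: "A \<in> carrier_mat n n"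
  shows "dim_gen_eigenspace (conj_mat A) (cnj c) k = dim_gen_eigenspace A c k"
proof -
  from char_poly_factorized[OF A] obtain as where "char_poly A = (\<Prod>a\<leftarrow>as. [:- a, 1:])" by auto
  from jordan_nf_exists[OF A this] obtain n_as where jA: "jordan_nf A n_as" ..
  show ?thesis unfolding dim_gen_eigenspace[OF jA] dim_gen_eigenspace[OF jordan_nf_conj[OF jA]]
    by (induct n_as, auto)
qed

lemma pow_mat_comm: assumes X: "X \<in> carrier_mat n n" and Y: "Y \<in> carrier_mat n n"
  and c: "X * Y = Y * X"
  shows "X ^\<^sub>m k * Y = Y * X ^\<^sub>m k"
proof (induct k)
  case 0
  then show ?case using X Y by simp
next
  case (Suc k)
  have Xk: "X ^\<^sub>m k \<in> carrier_mat n n" using X by auto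
  have "X ^\<^sub>m Suc k * Y = X ^\<^sub>m k * (X * Y)" using assoc_mult_mat[OF Xk X Y] by simp
  also have "\<dots> = (X ^\<^sub>m k * Y) * X" unfolding c using assoc_mult_mat[OF Xk Y X] by simp
  also have "\<dots> = Y * X ^\<^sub>m Suc k" unfolding Suc using assoc_mult_mat[OF Y Xk X] by simp
  finally show ?case .
qed

lemma pow_mat_mult_comm: assumes X: "X \<in> carrier_mat n n" and Y: "Y \<in> carrier_mat n n"
  and c: "X * Y = Y * X"
  shows "(X * Y) ^\<^sub>m k = X ^\<^sub>m k * Y ^\<^sub>m k"
proof (induct k)
  case 0
  then show ?case using X Y by simp
next
  case (Suc k)
  have Xk: "X ^\<^sub>m k \<in> carrier_mat n n" "Y ^\<^sub>m k \<in> carrier_mat n n" using X Y by auto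
  have "(X * Y) ^\<^sub>m Suc k = X ^\<^sub>m k * Y ^\<^sub>m k * (X * Y)" unfolding pow_mat.simps Suc ..
  also have "\<dots> = X ^\<^sub>m k * ((Y ^\<^sub>m k * X) * Y)" 
    using assoc_mult_mat[OF Xk(1,2) mult_carrier_mat[OF X Y]] assoc_mult_mat[OF Xk(2) X Y] by simp
  also have "\<dots> = X ^\<^sub>m k * (Y ^\<^sub>m k * X) * Y" 
    using assoc_mult_mat[OF Xk(1) mult_carrier_mat[OF Xk(2) X] Y] by simp
  also have "Y ^\<^sub>m k * X = X * Y ^\<^sub>m k" using pow_mat_comm[OF Y X c[symmetric]] by simp
  also have "X ^\<^sub>m k * (X * Y ^\<^sub>m k) * Y = X ^\<^sub>m Suc k * Y ^\<^sub>m Suc k" 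
    using assoc_mult_mat[OF Xk(1) mult_carrier_mat[OF X Xk(2)] Y] assoc_mult_mat[OF X Xk(2) Y]
      assoc_mult_mat[OF Xk(1) X mult_carrier_mat[OF Xk(2) Y]] by simp
  finally show ?case .
qed

lemma pow_mat_smult: fixes X :: "complex mat" assumes X: "X \<in> carrier_mat n n"
  shows "(c \<cdot>\<^sub>m X) ^\<^sub>m k = c ^ k \<cdot>\<^sub>m (X ^\<^sub>m k)"
proof (induct k)
  case 0
  then show ?case using X by (auto intro!: eq_matI)
next
  case (Suc k)
  have Xk: "X ^\<^sub>m k \<in> carrier_mat n n" using X by auto
  have "(c ^ k \<cdot>\<^sub>m X ^\<^sub>m k) * (c \<cdot>\<^sub>m X) = c ^ k \<cdot>\<^sub>m (X ^\<^sub>m k * (c \<cdot>\<^sub>m X))"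
    by (rule mult_smult_assoc_mat[OF Xk], insert X, auto)
  also have "X ^\<^sub>m k * (c \<cdot>\<^sub>m X) = c \<cdot>\<^sub>m (X ^\<^sub>m k * X)" by (rule mult_smult_distrib[OF Xk X])
  finally show ?case unfolding pow_mat.simps Suc using X Xk by (auto intro!: eq_matI)
qed

lemma pow_mat_one: "(1\<^sub>m n) ^\<^sub>m k = (1\<^sub>m n :: 'a :: semiring_1 mat)"
  by (induct k, auto)

lemma pow_mat_inv: assumes X: "X \<in> carrier_mat n n" and Y: "Y \<in> carrier_mat n n"
  and YX: "Y * X = 1\<^sub>m n" and XY: "X * Y = 1\<^sub>m n"
  shows "Y ^\<^sub>m k * X ^\<^sub>m k = 1\<^sub>m n"
  using pow_mat_mult_comm[OF Y X, of k] YX XY pow_mat_one by metis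

lemma dge_inverse: fixes M G :: "complex mat"
  assumes M: "M \<in> carrier_mat n n" and G: "G \<in> carrier_mat n n"
  and GM: "G * M = 1\<^sub>m n" and MG: "M * G = 1\<^sub>m n"
  shows "dim_gen_eigenspace G mu k = dim_gen_eigenspace M (inverse mu) k"
proof (cases "mu = 0")
  case True
  have cG: "char_matrix G 0 = G" "char_matrix M 0 = M" using G M unfolding char_matrix_def by (auto intro!: eq_matI)
  have "mat_kernel (G ^\<^sub>m k) = mat_kernel (G ^\<^sub>m k * 1\<^sub>m n)" using G by simp
  also have "\<dots> = mat_kernel (1\<^sub>m n)"
    by (rule mat_kernel_mult_eq[OF one_carrier_mat _ _ pow_mat_inv[OF G M MG GM]], insert G M, auto)
  finally have kG: "mat_kernel (G ^\<^sub>m k) = mat_kernel (1\<^sub>m n)" .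
  have "mat_kernel (M ^\<^sub>m k) = mat_kernel (M ^\<^sub>m k * 1\<^sub>m n)" using M by simp
  also have "\<dots> = mat_kernel (1\<^sub>m n)"
    by (rule mat_kernel_mult_eq[OF one_carrier_mat _ _ pow_mat_inv[OF M G GM MG]], insert G M, auto)
  finally have kM: "mat_kernel (M ^\<^sub>m k) = mat_kernel (1\<^sub>m n)" .
  show ?thesis unfolding dim_gen_eigenspace_def True inverse_zero cG
    by (rule kernel_dim_eqI, unfold kG kM, insert G M, auto)
next
  case False
  define nu where "nu = inverse mu"
  let ?C = "char_matrix G mu"
  have C: "?C \<in> carrier_mat n n" using G by auto
  have eq: "char_matrix M nu = (- nu) \<cdot>\<^sub>m (M * ?C)"
  proof -
    have "M * ?C = M * G + M * ((- mu) \<cdot>\<^sub>m 1\<^sub>m n)" unfolding char_matrix_def using M G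
      by (subst mult_add_distrib_mat[of _ n n], auto)
    also have "\<dots> = 1\<^sub>m n + (- mu) \<cdot>\<^sub>m M" unfolding MG using M by (simp add: mult_smult_distrib[of _ n n _ n])
    finally have "M * ?C = 1\<^sub>m n + (- mu) \<cdot>\<^sub>m M" .
    then show ?thesis unfolding char_matrix_def nu_def using M False
      by (intro eq_matI, auto simp: field_simps)
  qed
  have comm: "M * ?C = ?C * M"
  proof -
    have "M * ?C = M * G + M * ((- mu) \<cdot>\<^sub>m 1\<^sub>m n)" unfolding char_matrix_def using M G
      by (subst mult_add_distrib_mat[of _ n n], auto)
    also have "\<dots> = G * M + ((- mu) \<cdot>\<^sub>m 1\<^sub>m n) * M" unfolding MG GM using M
      by (auto intro!: eq_matI)
    also have "\<dots> = ?C * M" unfolding char_matrix_def using M G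
      by (subst add_mult_distrib_mat[of _ n n], auto)
    finally show ?thesis .
  qed
  have "char_matrix M nu ^\<^sub>m k = ((- nu) ^ k \<cdot>\<^sub>m M ^\<^sub>m k) * ?C ^\<^sub>m k"
    unfolding eq pow_mat_smult[OF mult_carrier_mat[OF M C]] pow_mat_mult_comm[OF M C comm]
    using M C by (simp add: mult_smult_assoc_mat[of _ n n _ n])
  then have "mat_kernel (char_matrix M nu ^\<^sub>m k) = mat_kernel (?C ^\<^sub>m k)"
  proof (simp only:, intro mat_kernel_mult_eq[of _ n n _ "(- mu) ^ k \<cdot>\<^sub>m G ^\<^sub>m k"])
    show "(- mu) ^ k \<cdot>\<^sub>m G ^\<^sub>m k * ((- nu) ^ k \<cdot>\<^sub>m M ^\<^sub>m k) = 1\<^sub>m n"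
    proof -
      have "(- inverse mu)^k * (- mu)^k = 1" using False by (simp add: power_mult_distrib[symmetric])
      then show ?thesis
      using pow_mat_inv[OF M G GM MG, of k] M G False unfolding nu_def
      by (simp add: mult_smult_distrib[of _ n n _ n] mult_smult_assoc_mat[of _ n n _ n], intro eq_matI, auto)
    qed
  qed (insert M G C, auto)
  moreover have "dim_row (char_matrix M (inverse mu)) = n" "dim_col (char_matrix M (inverse mu)) = n" 
    using M by (auto simp: char_matrix_def)
  ultimately show ?thesis unfolding dim_gen_eigenspace_def nu_def
    by (intro kernel_dim_eqI[symmetric], insert M C, auto)
qed


definition cs :: "complex \<Rightarrow> complex" where "cs z = inverse (cnj z)"

lemma cs_cs[simp]: "cs (cs z) = z" unfolding cs_def by simp
lemma cs_0[simp]: "cs 0 = 0" unfolding cs_def by simp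
lemma cnj_cs[simp]: "cnj (cs z) = inverse z" unfolding cs_def by simp
lemma cs_eq_iff: "cs x = y \<longleftrightarrow> x = cs y" by (metis cs_cs)

lemma order_linear_factors: "Polynomial.order z (\<Prod>r\<leftarrow>as. [:- r, 1:]) = count (mset as) (z :: complex)"
proof (induct as)
  case (Cons a as)
  have "(\<Prod>r\<leftarrow>a # as. [:- r, 1:]) = [:-a,1:] * (\<Prod>r\<leftarrow>as. [:- r, 1:])" by simp
  also have "Polynomial.order z \<dots> = Polynomial.order z [:-a,1:] + Polynomial.order z (\<Prod>r\<leftarrow>as. [:- r, 1:])"
  proof (rule order_mult)
    have "(\<Prod>r\<leftarrow>as. [:- r, 1:]) \<noteq> 0" by (auto simp: prod_list_zero_iff)
    moreover have "[:-a,1:] \<noteq> (0 :: complex poly)" by simp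
    ultimately show "[:-a,1:] * (\<Prod>r\<leftarrow>as. [:- r, 1:]) \<noteq> 0" by (simp only: mult_eq_0_iff) blast
  qed
  also have "Polynomial.order z [:-a,1:] = (if z = a then 1 else 0)" 
    using order_power_n_n[of a 1] by (auto intro: order_0I)
  finally show ?case using Cons by auto
qed (simp add: order_0I)

lemma count_mset_map_cs: "count (mset (map cs as)) z = count (mset as) (cs z)"
  by (induct as, auto simp: cs_eq_iff)

lemma length4: "length as = 4 \<Longrightarrow> \<exists> r1 r2 r3 r4. as = [r1,r2,r3,r4]"
  by (cases as; cases "tl as"; cases "tl (tl as)"; cases "tl (tl (tl as))"; auto)

lemma prod4: "(\<Prod>r\<leftarrow>[r1,r2,r3,r4]. [:- r, 1:]) = ([: r1*r2*r3*r4, -(r1*r2*r3+r1*r2*r4+r1*r3*r4+r2*r3*r4), r1*r2+r1*r3+r1*r4+r2*r3+r2*r4+r3*r4, -(r1+r2+r3+r4), 1:] :: complex poly)"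
  by (simp add: algebra_simps)

lemma star_poly: assumes p: "(\<Prod>r\<leftarrow>as. [:- r, 1:]) = [:1, -c1, c2, -c3, 1:]" and l: "length as = 4"
  shows "(\<Prod>r\<leftarrow>map cs as. [:- r, 1:]) = [:1, -cnj c3, cnj c2, -cnj c1, 1:]"
proof -
  from length4[OF l] obtain r1 r2 r3 r4 where as: "as = [r1,r2,r3,r4]" by auto
  from p[unfolded as prod4] have "r1*r2*r3*r4 = 1 \<and> r1*r2*r3+r1*r2*r4+r1*r3*r4+r2*r3*r4 = c1 \<and>
    r1*r2+r1*r3+r1*r4+r2*r3+r2*r4+r3*r4 = c2 \<and> r1+r2+r3+r4 = c3" 
    by (simp only: pCons_eq_iff neg_equal_iff_equal simp_thms)
  then have e: "r1*r2*r3*r4 = 1" "r1*r2*r3+r1*r2*r4+r1*r3*r4+r2*r3*r4 = c1"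
    "r1*r2+r1*r3+r1*r4+r2*r3+r2*r4+r3*r4 = c2" "r1+r2+r3+r4 = c3" by auto
  define s1 where "s1 = cnj r1" define s2 where "s2 = cnj r2" define s3 where "s3 = cnj r3" define s4 where "s4 = cnj r4"
  have s: "s1*s2*s3*s4 = 1" using arg_cong[OF e(1), of cnj] unfolding s1_def s2_def s3_def s4_def by simp
  have nz: "s1 \<noteq> 0" "s2 \<noteq> 0" "s3 \<noteq> 0" using s by auto
  then have s4: "s4 = inverse (s1*s2*s3)" using s by (simp add: field_simps)
  have c: "cnj c1 = s1*s2*s3+s1*s2*s4+s1*s3*s4+s2*s3*s4" "cnj c2 = s1*s2+s1*s3+s1*s4+s2*s3+s2*s4+s3*s4"
    "cnj c3 = s1+s2+s3+s4"
    unfolding e(2-4)[symmetric] s1_def s2_def s3_def s4_def by simp_all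
  have cs: "map cs as = [inverse s1, inverse s2, inverse s3, inverse s4]" 
    unfolding as s1_def s2_def s3_def s4_def cs_def by simp
  show ?thesis unfolding cs prod4 c unfolding s4 using nz by (simp add: field_simps)
qed

lemma mset_star_eq: assumes p: "(\<Prod>r\<leftarrow>as. [:- r, 1:]) = [:1, -c1, c2, -c3, 1:]" and l: "length as = 4"
  and sym: "c3 = cnj c1" "c2 \<in> \<real>"
  shows "mset (map cs as) = mset as"
proof -
  have "cnj c2 = c2" using sym(2) by (simp add: Reals_cnj_iff)
  then have eq: "(\<Prod>r\<leftarrow>map cs as. [:- r, 1:]) = (\<Prod>r\<leftarrow>as. [:- r, 1:])" 
    unfolding star_poly[OF p l] p sym(1) by simp
  show ?thesis
  proof (rule multiset_eqI)
    fix z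
    show "count (mset (map cs as)) z = count (mset as) z"
      using arg_cong[OF eq, of "Polynomial.order z"] unfolding order_linear_factors .
  qed
qed

lemma order_cs_sym: assumes p: "(\<Prod>r\<leftarrow>as. [:- r, 1:]) = [:1, -c1, c2, -c3, 1:]" and l: "length as = 4"
  and sym: "c3 = cnj c1" "c2 \<in> \<real>"
  shows "count (mset as) (cs z) = count (mset as) z"
  using mset_star_eq[OF assms] count_mset_map_cs[of as z] by metis

lemma c_reciprocal_imp: assumes p: "(\<Prod>r\<leftarrow>as. [:- r, 1:]) = [:1, -c1, c2, -c3, 1:]" and l: "length as = 4"
  and rec: "c_reciprocal [:1, -c1, c2, -c3, 1:]"
  shows "c3 = cnj c1 \<and> c2 \<in> \<real>"
proof -
  let ?p = "[:1, -c1, c2, -c3, 1:] :: complex poly"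
  have p0: "?p \<noteq> 0" by simp
  have ord: "Polynomial.order z ?p = count (mset as) z" for z unfolding p[symmetric] order_linear_factors ..
  have "mset (map cs as) = mset as"
  proof (rule multiset_eqI)
    fix z
    have "Polynomial.order (cs z) ?p = Polynomial.order z ?p"
    proof (cases "poly ?p z = 0")
      case True
      with rec show ?thesis unfolding c_reciprocal_def cs_def by auto
    next
      case False
      then have z0: "Polynomial.order z ?p = 0" by (rule order_0I)
      show ?thesis
      proof (cases "poly ?p (cs z) = 0")
        case True
        with rec have "Polynomial.order (cs (cs z)) ?p = Polynomial.order (cs z) ?p" 
          unfolding c_reciprocal_def cs_def[symmetric] by blast
        then show ?thesis by simp
      next
        case False
        then show ?thesis using z0 by (simp add: order_0I)
      qed
    qed
    then show "count (mset (map cs as)) z = count (mset as) z"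
      unfolding count_mset_map_cs ord by simp
  qed
  then have "(\<Prod>r\<leftarrow>map cs as. [:- r, 1:]) = (\<Prod>r\<leftarrow>as. [:- r, 1:])"
    by (metis mset_map prod_mset_prod_list)
  then have "[:1, -cnj c3, cnj c2, -cnj c1, 1:] = ?p" unfolding star_poly[OF p l] p .
  then have "c1 = cnj c3" "cnj c2 = c2" by auto
  then show ?thesis by (auto simp: Reals_cnj_iff)
qed


lemma sum_min_big: "sum_list xs \<le> k \<Longrightarrow> sum_list (map (min k) xs) = sum_list (xs :: nat list)"
  by (induct xs, auto simp: min_def)

lemma filter_conv: "[(n, e)\<leftarrow>n_as . e = c] = filter (\<lambda> na. snd na = c) n_as"
  by (induct n_as, auto)

lemma dge_big: assumes jnf: "jordan_nf A n_as" and k: "Polynomial.order c (char_poly A) \<le> k"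
  shows "dim_gen_eigenspace A c k = Polynomial.order c (char_poly A)"
proof -
  have "dim_gen_eigenspace A c k = sum_list (map (min k) (map fst [(n, e)\<leftarrow>n_as . e = c]))"
    unfolding dim_gen_eigenspace[OF jnf] by (simp add: o_def)
  also have "\<dots> = sum_list (map fst [(n, e)\<leftarrow>n_as . e = c])"
    by (rule sum_min_big, insert k, unfold jordan_nf_order[OF jnf] filter_conv, auto)
  finally show ?thesis unfolding jordan_nf_order[OF jnf] filter_conv .
qed

lemma dge_0: "dim_gen_eigenspace A c 0 = 0 \<or> True" by simp

lemma dge_zero: assumes jnf: "jordan_nf A n_as" shows "dim_gen_eigenspace A c 0 = 0"
  unfolding dim_gen_eigenspace[OF jnf] by (induct n_as, auto)

lemma list_pos_bound: "s \<in> set xs \<Longrightarrow> (\<And> x. x \<in> set xs \<Longrightarrow> x \<ge> 1) \<Longrightarrow> s + length xs \<le> sum_list xs + (1 :: nat)"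
proof (induct xs)
  case (Cons x xs)
  show ?case
  proof (cases "s = x")
    case True
    have "length xs \<le> sum_list xs" using Cons(3) by (induct xs, auto, fastforce)
    then show ?thesis using True by auto
  next
    case False
    then have "s + length xs \<le> sum_list xs + 1" using Cons by auto
    then show ?thesis using Cons(3)[of x] by auto
  qed
qed simp

lemma dge_block_bound: assumes jnf: "jordan_nf A n_as" and sc: "(s,c) \<in> set n_as"
  shows "s + dim_gen_eigenspace A c 1 \<le> Polynomial.order c (char_poly A) + 1"
proof -
  let ?xs = "map fst [(n, e)\<leftarrow>n_as . e = c]"
  have pos: "x \<ge> 1" if "x \<in> set ?xs" for x using jnf that unfolding jordan_nf_def by force
  have "dim_gen_eigenspace A c 1 = sum_list (map (min 1) ?xs)"
    unfolding dim_gen_eigenspace[OF jnf] by (simp add: o_def)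
  also have "\<dots> = length ?xs" using pos 
    by (induct n_as, auto simp: min_def)
  finally have d: "dim_gen_eigenspace A c 1 = length ?xs" .
  have "s \<in> set ?xs" using sc by force
  from list_pos_bound[OF this pos] show ?thesis unfolding d jordan_nf_order[OF jnf] filter_conv by simp
qed

lemma mat_trace_diag: "mat_trace X = sum_list (diag_mat X)"
proof -
  have "sum_list (map f [0..<n]) = (\<Sum>i<n. f i)" for f :: "nat \<Rightarrow> complex" and n by (induct n, auto)
  then show ?thesis unfolding mat_trace_def diag_mat_def by simp
qed

lemma mat_trace_comm: assumes X: "X \<in> carrier_mat n m" and Y: "Y \<in> carrier_mat m n"
  shows "mat_trace (X * Y) = mat_trace (Y * X)"
proof -
  have "mat_trace (X * Y) = (\<Sum>i<n. \<Sum>j<m. X $$ (i,j) * Y $$ (j,i))"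
    unfolding mat_trace_def using X Y by (auto simp: scalar_prod_def atLeast0LessThan intro!: sum.cong)
  also have "\<dots> = (\<Sum>j<m. \<Sum>i<n. Y $$ (j,i) * X $$ (i,j))" by (subst sum.swap, auto simp: mult.commute)
  also have "\<dots> = mat_trace (Y * X)"
    unfolding mat_trace_def using X Y by (auto simp: scalar_prod_def atLeast0LessThan intro!: sum.cong)
  finally show ?thesis .
qed

lemma diag_mat_diag_block_mat: "(\<And> B. B \<in> set Bs \<Longrightarrow> dim_row B = dim_col B) \<Longrightarrow> diag_mat (diag_block_mat Bs) = concat (map diag_mat Bs)"
proof (induct Bs)
  case Nil
  then show ?case by (simp add: diag_mat_def)
next
  case (Cons B Bs)
  let ?D = "diag_block_mat Bs"
  have sq: "dim_row ?D = dim_col ?D" using Cons(2) 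
    by (subst dim_diag_block_mat)+ (induct Bs, auto)
  show ?case using Cons sq by (simp add: Let_def, subst diag_four_block_mat[of _ "dim_row B" _ "dim_row ?D"], auto)
qed

lemma trace_jordan_matrix_pow: "mat_trace (jordan_matrix n_as ^\<^sub>m k) = sum_list (map (\<lambda> r. r ^ k) (concat (map (\<lambda> (n, a). replicate n a) n_as)))"
proof -
  have "mat_trace (jordan_matrix n_as ^\<^sub>m k) = sum_list (concat (map diag_mat (map (\<lambda>(n, a). jordan_block n a ^\<^sub>m k) n_as)))"
    unfolding mat_trace_diag jordan_matrix_pow by (subst diag_mat_diag_block_mat, auto)
  also have "\<dots> = sum_list (map (\<lambda> r. r ^ k) (concat (map (\<lambda> (n, a). replicate n a) n_as)))"
    by (induct n_as, auto simp: diag_jordan_block_pow map_replicate)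
  finally show ?thesis .
qed

lemma trace_pow_roots: fixes A :: "complex mat" assumes A: "A \<in> carrier_mat n n"
  and cp: "char_poly A = (\<Prod>r\<leftarrow>as. [:- r, 1:])"
  shows "mat_trace (A ^\<^sub>m k) = sum_list (map (\<lambda> r. r ^ k) as)"
proof -
  from jordan_nf_exists[OF A cp] obtain n_as where jnf: "jordan_nf A n_as" ..
  from jnf[unfolded jordan_nf_def similar_mat_def] obtain P Q where
    wit: "similar_mat_wit A (jordan_matrix n_as) P Q" by auto
  from similar_mat_witD2[OF A wit] have J: "jordan_matrix n_as \<in> carrier_mat n n"
    and P: "P \<in> carrier_mat n n" and Q: "Q \<in> carrier_mat n n" and QP: "Q * P = 1\<^sub>m n" by auto
  let ?J = "jordan_matrix n_as ^\<^sub>m k"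
  have Jk: "?J \<in> carrier_mat n n" using J by auto
  have "mat_trace (A ^\<^sub>m k) = mat_trace (P * (?J * Q))"
    unfolding similar_mat_wit_pow_id[OF wit, of k] using P Jk Q by simp
  also have "\<dots> = mat_trace ((?J * Q) * P)" by (rule mat_trace_comm[OF P], insert Jk Q, auto)
  also have "(?J * Q) * P = ?J" using Jk Q P QP by (simp add: right_mult_one_mat[OF Jk])
  finally have tr: "mat_trace (A ^\<^sub>m k) = mat_trace ?J" .
  let ?bs = "concat (map (\<lambda> (n, a). replicate n a) n_as)"
  have "char_poly A = (\<Prod>(n, a)\<leftarrow>n_as. [:- a, 1:] ^ n)" by (rule jordan_nf_char_poly[OF jnf])
  also have "\<dots> = (\<Prod>r\<leftarrow>?bs. [:- r, 1:])" by (induct n_as, auto simp: prod_list_replicate)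
  finally have cp2: "char_poly A = (\<Prod>r\<leftarrow>?bs. [:- r, 1:])" .
  have "mset as = mset ?bs"
  proof (rule multiset_eqI)
    fix z
    show "count (mset as) z = count (mset ?bs) z"
      using order_linear_factors[of z as] order_linear_factors[of z ?bs] cp cp2 by simp
  qed
  then have "sum_list (map (\<lambda> r. r ^ k) as) = sum_list (map (\<lambda> r. r ^ k) ?bs)"
    by (metis mset_map sum_mset_sum_list)
  then show ?thesis unfolding tr trace_jordan_matrix_pow by simp
qed


lemma smult_smult_mat: "a \<cdot>\<^sub>m (b \<cdot>\<^sub>m X) = (a * b :: complex) \<cdot>\<^sub>m X"
  by (intro eq_matI, auto)

lemma one_smult_mat'[simp]: "(1 :: complex) \<cdot>\<^sub>m X = X"
  by (intro eq_matI, auto)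

lemma conj_inv_exists: assumes A: "A \<in> SL_mat n"
  shows "is_inv_mat n (adj_mat (conj_mat A)) (conj_mat A)"
proof -
  from A have Ac: "A \<in> carrier_mat n n" and d: "det A = 1" unfolding SL_mat_def by auto
  have M: "conj_mat A \<in> carrier_mat n n" using Ac by simp
  have dM: "det (conj_mat A) = 1" unfolding conj_mat_det d by simp
  show ?thesis unfolding is_inv_mat_def using adj_mat[OF M] dM M by auto
qed

lemma dge_ginv: assumes A: "A \<in> carrier_mat n n" and G: "is_inv_mat n G (conj_mat A)"
  shows "dim_gen_eigenspace G mu k = dim_gen_eigenspace A (cs mu) k"
proof -
  from G[unfolded is_inv_mat_def] have M: "conj_mat A \<in> carrier_mat n n" and Gc: "G \<in> carrier_mat n n"
    and MG: "conj_mat A * G = 1\<^sub>m n" and GM: "G * conj_mat A = 1\<^sub>m n" by auto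
  have "dim_gen_eigenspace G mu k = dim_gen_eigenspace (conj_mat A) (inverse mu) k"
    by (rule dge_inverse[OF M Gc GM MG])
  also have "\<dots> = dim_gen_eigenspace (conj_mat A) (cnj (cs mu)) k" by simp
  also have "\<dots> = dim_gen_eigenspace A (cs mu) k" by (rule dge_conj[OF A])
  finally show ?thesis .
qed

lemma rev_iff: assumes A: "A \<in> SL_mat 4"
  shows "c_reversible 4 A \<longleftrightarrow> (\<forall> mu k. dim_gen_eigenspace A mu k = dim_gen_eigenspace A (cs mu) k)"
proof -
  from A have Ac: "A \<in> carrier_mat 4 4" and d: "det A = 1" unfolding SL_mat_def by auto
  show ?thesis
  proof
    assume "c_reversible 4 A"
    then obtain h hinv ginv where h: "h \<in> SL_mat 4" and hi: "is_inv_mat 4 hinv h"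
      and gi: "is_inv_mat 4 ginv (conj_mat A)" and eq: "h * A * hinv = ginv"
      unfolding c_reversible_def by auto
    from hi have hc: "h \<in> carrier_mat 4 4" "hinv \<in> carrier_mat 4 4" and hh: "h * hinv = 1\<^sub>m 4" "hinv * h = 1\<^sub>m 4"
      unfolding is_inv_mat_def by auto
    from gi have gc: "ginv \<in> carrier_mat 4 4" unfolding is_inv_mat_def by auto
    have "hinv * ginv * h = (hinv * h) * A * (hinv * h)"
      unfolding eq[symmetric] using hc Ac by (simp add: assoc_mult_mat[of _ 4 4 _ 4 _ 4])
    also have "\<dots> = A" unfolding hh using Ac by simp
    finally have "A = hinv * ginv * h" by simp
    then have "similar_mat A ginv" using hc gc Ac hh
      by (intro similar_matI[of _ _ hinv h 4], auto)
    from dim_gen_eigenspace_similar[OF this]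
    show "\<forall> mu k. dim_gen_eigenspace A mu k = dim_gen_eigenspace A (cs mu) k"
      using dge_ginv[OF Ac gi] by simp
  next
    assume sym: "\<forall> mu k. dim_gen_eigenspace A mu k = dim_gen_eigenspace A (cs mu) k"
    define G where "G = adj_mat (conj_mat A)"
    have gi: "is_inv_mat 4 G (conj_mat A)" unfolding G_def by (rule conj_inv_exists[OF A])
    then have Gc: "G \<in> carrier_mat 4 4" unfolding is_inv_mat_def by auto
    have "similar_mat A G"
      by (rule similar_by_dim_gen_eigenspace[OF Ac Gc], unfold dge_ginv[OF Ac gi], insert sym, auto)
    from similar_matD[OF this] obtain n P Q where c: "{A, G, P, Q} \<subseteq> carrier_mat n n" and 
      PQ: "P * Q = 1\<^sub>m n" "Q * P = 1\<^sub>m n" and AG: "A = P * G * Q" by auto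
    from c Ac have n: "n = 4" by auto
    from c have P: "P \<in> carrier_mat 4 4" and Q: "Q \<in> carrier_mat 4 4" unfolding n by auto
    have "det P * det Q = 1" using det_mult[OF P Q] PQ unfolding n by simp
    then have dQ: "det Q \<noteq> 0" by auto
    define c where "c = csqrt (csqrt (inverse (det Q)))"
    have c4: "c ^ 4 = inverse (det Q)" unfolding c_def 
      by (metis power2_csqrt power_mult numeral_Bit0 mult_2 numeral_One mult.commute one_add_one)
    then have c0: "c \<noteq> 0" using dQ by auto
    define h where "h = c \<cdot>\<^sub>m Q"
    define hinv where "hinv = inverse c \<cdot>\<^sub>m P"
    have hc: "h \<in> carrier_mat 4 4" "hinv \<in> carrier_mat 4 4" unfolding h_def hinv_def using P Q by auto
    have dh: "det h = 1" unfolding h_def det_smult using Q c4 dQ by auto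
    have hh1: "h * hinv = 1\<^sub>m 4" unfolding h_def hinv_def
      using PQ c0 P Q unfolding n by (simp add: mult_smult_distrib[of _ 4 4 _ 4] mult_smult_assoc_mat[of _ 4 4 _ 4] smult_smult_mat)
    have hh2: "hinv * h = 1\<^sub>m 4" unfolding h_def hinv_def
      using PQ c0 P Q unfolding n by (simp add: mult_smult_distrib[of _ 4 4 _ 4] mult_smult_assoc_mat[of _ 4 4 _ 4] smult_smult_mat)
    have "h * A * hinv = Q * A * P" unfolding h_def hinv_def
      using c0 P Q Ac by (simp add: mult_smult_distrib[of _ 4 4 _ 4] mult_smult_assoc_mat[of _ 4 4 _ 4] smult_smult_mat)
    also have "\<dots> = (Q * P) * G * (Q * P)" unfolding AG using P Q Gc 
      by (simp add: assoc_mult_mat[of _ 4 4 _ 4 _ 4])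
    also have "\<dots> = G" using PQ Gc unfolding n by simp
    finally have eq: "h * A * hinv = G" .
    show "c_reversible 4 A" unfolding c_reversible_def
      by (rule exI[of _ h], rule exI[of _ hinv], rule exI[of _ G], insert hc dh hh1 hh2 gi eq, 
        auto simp: SL_mat_def is_inv_mat_def)
  qed
qed


lemma count_list_two: "x \<noteq> y \<Longrightarrow> count_list xs x + count_list xs y \<le> length xs"
  by (induct xs, auto)

lemma count_two_le: "x \<noteq> y \<Longrightarrow> count (mset xs) x + count (mset xs) y \<le> length xs"
  unfolding count_mset by (rule count_list_two)

lemma degree_lb: assumes p: "p \<noteq> (0 :: complex poly)" and xy: "x \<noteq> y"
  and dx: "[:-x,1:]^i dvd p" and dy: "[:-y,1:]^j dvd p"
  shows "i + j \<le> degree p"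
proof -
  from dx obtain r where pr: "p = [:-x,1:]^i * r" by (auto elim: dvdE)
  with p have r: "r \<noteq> 0" by auto
  have "j \<le> Polynomial.order y p" using dy p by (simp add: order_divides)
  also have "Polynomial.order y p = Polynomial.order y ([:-x,1:]^i) + Polynomial.order y r"
    unfolding pr by (rule order_mult, insert p pr, auto)
  also have "Polynomial.order y ([:-x,1:]^i) = 0" using xy 
    by (intro order_0I, auto)
  finally have "[:-y,1:]^j dvd r" using r by (simp add: order_divides)
  then have "degree ([:-y,1:]^j) \<le> degree r" using r by (rule dvd_imp_degree_le)
  then have "j \<le> degree r" by (simp add: degree_power_eq)
  moreover have "degree p = i + degree r" unfolding pr using r by (simp add: degree_mult_eq degree_power_eq)
  ultimately show ?thesis by simp
qed

lemma jnf_char_poly_annihilates: assumes A: "A \<in> carrier_mat n n" and jnf: "jordan_nf A n_as"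
  shows "poly_mat n (char_poly A) A = 0\<^sub>m n n"
proof (rule poly_mat_jnf_0[OF A jnf])
  fix s c assume sc: "(s,c) \<in> set n_as"
  have "s \<le> Polynomial.order c (char_poly A)" unfolding jordan_nf_order[OF jnf]
    using sc by (induct n_as, auto)
  then show "[:-c,1:]^s dvd char_poly A" by (simp add: order_divides)
qed

locale four_mat =
  fixes A :: "complex mat" and as :: "complex list" and n_as :: "(nat \<times> complex) list"
  assumes Ac: "A \<in> carrier_mat 4 4" and cp: "char_poly A = (\<Prod>r\<leftarrow>as. [:- r, 1:])"
    and len: "length as = 4" and jnf: "jordan_nf A n_as"
begin

lemma ordc: "Polynomial.order z (char_poly A) = count (mset as) z"
  unfolding cp order_linear_factors ..

lemma cp0: "char_poly A \<noteq> 0" unfolding cp by (auto simp: prod_list_zero_iff)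

lemma dge_le: "dim_gen_eigenspace A c k \<le> count (mset as) c"
proof -
  have "dim_gen_eigenspace A c k = sum_list (map (min k) (map fst [(n, e)\<leftarrow>n_as . e = c]))"
    unfolding dim_gen_eigenspace[OF jnf] by (simp add: o_def)
  also have "\<dots> \<le> sum_list (map fst [(n, e)\<leftarrow>n_as . e = c])"
    by (induct n_as, auto)
  finally show ?thesis unfolding ordc[symmetric] jordan_nf_order[OF jnf] filter_conv .
qed

lemma dge_pos: assumes c: "count (mset as) c \<ge> 1" and k: "k \<ge> 1" shows "dim_gen_eigenspace A c k \<ge> 1"
proof -
  from c have "sum_list (map fst [(n, e)\<leftarrow>n_as . e = c]) \<ge> 1"
    unfolding ordc[symmetric] jordan_nf_order[OF jnf] filter_conv by simp
  then obtain s where s: "(s,c) \<in> set n_as" by (induct n_as, auto split: if_splits)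
  with jnf have "s \<noteq> 0" unfolding jordan_nf_def by force
  with s k have "sum_list (map (min k) (map fst [(n, e)\<leftarrow>n_as . e = c])) \<ge> 1"
    by (induct n_as, auto)
  then show ?thesis unfolding dim_gen_eigenspace[OF jnf] by (simp add: o_def)
qed

lemma block_count: assumes "(s,c) \<in> set n_as" shows "s \<le> count (mset as) c"
  unfolding ordc[symmetric] jordan_nf_order[OF jnf] using assms by (induct n_as, auto)

lemma block_pos: assumes "(s,c) \<in> set n_as" shows "s \<ge> 1"
  using assms jnf unfolding jordan_nf_def by (cases s, force+)

lemma mp: "is_minimal_poly 4 A (minimal_poly 4 A)"
  by (rule minimal_poly_exists[OF Ac cp0 jnf_char_poly_annihilates[OF Ac jnf]])

lemmas mpD = minimal_polyD[OF mp]

lemma dge2: assumes "count (mset as) c = 2" shows "dim_gen_eigenspace A c 2 = 2"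
  using dge_big[OF jnf, of c 2] assms unfolding ordc by simp

lemma deg3: assumes m: "mset as = {#x,x,y,y#}" and xy: "x \<noteq> y"
  and dx: "dim_gen_eigenspace A x 1 = 1" and dy: "dim_gen_eigenspace A y 1 = 2"
  shows "degree (minimal_poly 4 A) = 3"
proof -
  let ?m = "minimal_poly 4 A"
  have cx: "count (mset as) x = 2" and cy: "count (mset as) y = 2" unfolding m using xy by auto
  have roots: "c = x \<or> c = y" if "(s,c) \<in> set n_as" for s c
    using block_count[OF that] block_pos[OF that] unfolding m by (auto split: if_splits)
  have "2 \<le> Polynomial.order x ?m"
    by (rule double_root_order[OF mpD(1)], insert annihilator_double_root[OF Ac mpD(2)] dx dge2[OF cx], auto)
  then have d1: "[:-x,1:]^2 dvd ?m" by (simp add: order_divides)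
  have ys: "y \<in> set as" using cy by (metis count_eq_zero_iff set_mset_mset zero_neq_numeral)
  have "poly ?m y = 0" by (rule annihilator_root[OF Ac mpD(2)], unfold cp, insert ys, 
    auto simp: poly_prod_list_zero_iff)
  then have d2: "[:-y,1:]^1 dvd ?m" by (simp add: poly_eq_0_iff_dvd)
  from degree_lb[OF mpD(1) xy d1 d2] have lb: "3 \<le> degree ?m" by simp
  define q where "q = [:-x,1:]^2 * [:-y,1:]"
  have q0: "q \<noteq> 0" unfolding q_def mult_eq_0_iff by simp
  have "degree q = degree ([:-x,1:]^2) + degree [:-y,1:]" unfolding q_def
    by (rule degree_mult_eq, auto)
  then have dq: "degree q = 3" by (simp add: degree_power_eq)
  have "poly_mat 4 q A = 0\<^sub>m 4 4"
  proof (rule poly_mat_jnf_0[OF Ac jnf])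
    fix s c assume sc: "(s,c) \<in> set n_as"
    from dge_block_bound[OF jnf sc] have bound: "s + dim_gen_eigenspace A c 1 \<le> count (mset as) c + 1"
      unfolding ordc .
    from roots[OF sc] show "[:-c,1:]^s dvd q"
    proof
      assume c: "c = x"
      with bound dx cx have "s \<le> 2" by auto
      then have "[:-c,1:]^s dvd [:-c,1:]^2" by (rule le_imp_power_dvd)
      then show ?thesis unfolding q_def c by (metis dvd_mult2)
    next
      assume c: "c = y"
      with bound dy cy have "s \<le> 1" by auto
      then have "[:-c,1:]^s dvd [:-c,1:]^1" by (rule le_imp_power_dvd)
      then show ?thesis unfolding q_def c power_one_right by (metis dvd_mult)
    qed
  qed
  from mpD(3)[OF q0 this] dq lb show ?thesis by simp
qed

lemma deg_eq: assumes m: "mset as = {#a,a,b,b#}" and ab: "a \<noteq> b"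
  shows "degree (minimal_poly 4 A) = 3 \<longleftrightarrow> dim_gen_eigenspace A a 1 \<noteq> dim_gen_eigenspace A b 1"
proof -
  let ?m = "minimal_poly 4 A"
  have ca: "count (mset as) a = 2" and cb: "count (mset as) b = 2" unfolding m using ab by auto
  have range: "dim_gen_eigenspace A c 1 = 1 \<or> dim_gen_eigenspace A c 1 = 2" if "count (mset as) c = 2" for c
    using dge_le[of c 1] dge_pos[of c 1] that by auto
  have m2: "mset as = {#b,b,a,a#}" unfolding m by (simp add: add_mset_commute)
  show ?thesis
  proof (cases "dim_gen_eigenspace A a 1 = dim_gen_eigenspace A b 1")
    case False
    then show ?thesis using range[OF ca] range[OF cb] deg3[OF m ab] deg3[OF m2 ab[symmetric]] by auto
  next
    case True
    from range[OF ca] show ?thesis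
    proof
      assume d: "dim_gen_eigenspace A a 1 = 1"
      have "2 \<le> Polynomial.order c ?m" if "c = a \<or> c = b" for c
      proof -
        have cc: "count (mset as) c = 2" using that ca cb by auto
        have "dim_gen_eigenspace A c 1 = 1" using that d True by auto
        then show ?thesis
          by (intro double_root_order[OF mpD(1)], insert annihilator_double_root[OF Ac mpD(2)] dge2[OF cc], auto)
      qed
      then have "[:-a,1:]^2 dvd ?m" "[:-b,1:]^2 dvd ?m" by (auto simp: order_divides)
      from degree_lb[OF mpD(1) ab this] have "4 \<le> degree ?m" by simp
      then show ?thesis using True by simp
    next
      assume d: "dim_gen_eigenspace A a 1 = 2"
      have roots: "c = a \<or> c = b" if "(s,c) \<in> set n_as" for s c
        using block_count[OF that] block_pos[OF that] unfolding m by (auto split: if_splits)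
      define q where "q = [:-a,1:] * [:-b,1:]"
      have q0: "q \<noteq> 0" unfolding q_def by auto
      have dq: "degree q = 2" unfolding q_def by (simp add: degree_mult_eq)
      have "poly_mat 4 q A = 0\<^sub>m 4 4"
      proof (rule poly_mat_jnf_0[OF Ac jnf])
        fix s c assume sc: "(s,c) \<in> set n_as"
        from dge_block_bound[OF jnf sc] have bound: "s + dim_gen_eigenspace A c 1 \<le> count (mset as) c + 1"
          unfolding ordc .
        from roots[OF sc] have "s \<le> 1" using bound d True ca cb by auto
        with block_pos[OF sc] have s: "s = 1" by auto
        from roots[OF sc] show "[:-c,1:]^s dvd q" unfolding s q_def power_one_right
          by (auto simp only: dvd_triv_left dvd_triv_right)
      qed
      from mpD(3)[OF q0 this] dq have "degree ?m \<le> 2" by simp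
      then show ?thesis using True by simp
    qed
  qed
qed

end


lemma mset2: assumes xy: "x \<noteq> y" and cx: "count (mset as) x = 2" and cy: "count (mset as) y = 2"
  and l: "length as = 4"
  shows "mset as = {#x,x,y,y#}"
proof -
  let ?M = "{#x,x,y,y#}"
  have sub: "?M \<subseteq># mset as"
    by (rule mset_subset_eqI, insert xy cx cy, auto)
  have "size ?M = size (mset as)" using l by simp
  with sub have "?M = mset as" by (metis less_irrefl mset_subset_size subset_mset.le_imp_less_or_eq)
  then show ?thesis by simp
qed

lemma cs_neq_norm: "a \<noteq> cs a \<Longrightarrow> norm a \<noteq> 1"
proof
  assume "a \<noteq> cs a" "norm a = 1"
  then have "a * cnj a = 1" by (metis complex_norm_square of_real_1 power_one)
  then have "cs a = a" unfolding cs_def by (metis inverse_unique mult.commute)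
  with \<open>a \<noteq> cs a\<close> show False by simp
qed

lemma norm_cs: "norm (cs a) = inverse (norm a)" unfolding cs_def by (simp add: norm_inverse)

lemma unbounded_two: assumes a: "a \<noteq> cs a"
  shows "\<not> Bseq (\<lambda> k. 2 * a ^ k + 2 * cs a ^ k)"
proof
  assume "Bseq (\<lambda> k. 2 * a ^ k + 2 * cs a ^ k)"
  then obtain K where K: "\<And> k. norm (2 * a ^ k + 2 * cs a ^ k) \<le> K" unfolding Bseq_def by auto
  have na: "norm a \<noteq> 1" by (rule cs_neq_norm[OF a])
  have a0: "a \<noteq> 0" using a by auto
  define u where "u = (if norm a > 1 then a else cs a)"
  define w where "w = (if norm a > 1 then cs a else a)"
  have sum: "2 * a ^ k + 2 * cs a ^ k = 2 * u ^ k + 2 * w ^ k" for k unfolding u_def w_def by auto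
  have nu: "norm u > 1" and nw: "norm w \<le> 1" using na a0 unfolding u_def w_def
    by (auto simp: norm_cs field_simps one_less_inverse_iff inverse_le_1_iff)
  have tri: "norm (2 * u ^ k) - norm (2 * w ^ k) \<le> K" for k
    using K[of k] norm_diff_ineq[of "2 * u ^ k" "2 * w ^ k"] unfolding sum by auto
  have bound: "2 * norm u ^ k - 2 \<le> K" for k
  proof -
    have "norm w ^ k \<le> 1" using nw by (simp add: power_le_one)
    then show ?thesis using tri[of k] by (auto simp: norm_mult norm_power)
  qed
  from real_arch_pow[OF nu, of "(K + 2) / 2"] obtain k where "(K + 2) / 2 < norm u ^ k" by auto
  with bound[of k] show False by auto
qed

lemma bounded_circle: assumes "\<And> r. r \<in> set as \<Longrightarrow> norm r = 1"
  shows "Bseq (\<lambda> k. sum_list (map (\<lambda> r. r ^ k) (as :: complex list)))"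
proof -
  have b: "norm (sum_list (map (\<lambda> r. r ^ k) as)) \<le> real (length as)" for k using assms
  proof (induct as)
    case (Cons r as)
    have "norm (r ^ k + sum_list (map (\<lambda> r. r ^ k) as)) \<le> norm (r ^ k) + norm (sum_list (map (\<lambda> r. r ^ k) as))"
      by (rule norm_triangle_ineq)
    also have "norm (r ^ k) = 1" using Cons(2)[of r] by (simp add: norm_power)
    finally show ?case using Cons by auto
  qed simp
  have "norm (sum_list (map (\<lambda> r. r ^ k) as)) \<le> real (length as) + 1" for k using b[of k] by linarith
  then show ?thesis by (intro BseqI[of "real (length as) + 1"], auto)
qed

lemma ab_cases: assumes ab: "(a * cs a)^2 = 1" 
  shows "(a * cs a = 1 \<and> Im a = 0) \<or> (a * cs a = -1 \<and> Re a = 0)"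
proof -
  have a0: "a \<noteq> 0" using ab by auto
  from ab have "a * cs a = 1 \<or> a * cs a = -1" by (simp add: power2_eq_1_iff)
  then show ?thesis
  proof
    assume h: "a * cs a = 1"
    then have "a = cnj a" unfolding cs_def using a0 by (simp add: field_simps)
    from arg_cong[OF this, of Im] have "Im a = - Im a" unfolding cnj.sel .
    then have "Im a = 0" by simp
    with h show ?thesis by auto
  next
    assume h: "a * cs a = -1"
    then have "a = - cnj a" unfolding cs_def using a0 by (simp add: field_simps)
    from arg_cong[OF this, of Re] have "Re a = - Re a" unfolding cnj.sel uminus_complex.sel .
    then have "Re a = 0" by simp
    with h show ?thesis by auto
  qed
qed

lemma tr_real_case: assumes "Im a = 0" "a \<noteq> 0" shows "Im (2 * a + 2 * cs a) = 0"
  using assms unfolding cs_def by (simp add: complex_is_Real_iff)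

lemma aux_real: "(t :: real) \<noteq> 0 \<Longrightarrow> t * 2 + t * (t * (t * 2)) \<noteq> 0"
proof -
  assume t: "t \<noteq> 0"
  have "t * 2 + t * (t * (t * 2)) = (2 * t) * (1 + t * t)" by (simp add: algebra_simps)
  moreover have "1 + t * t > 0" by (simp add: add_pos_nonneg)
  ultimately show ?thesis using t by simp
qed

lemma tr_imag_case: assumes "Re a = 0" "a \<noteq> 0" 
  shows "Re (2 * a + 2 * cs a) = 0" "Im (2 * a + 2 * cs a) \<noteq> 0"
proof -
  have "Im a \<noteq> 0" using assms by (simp add: complex_eq_iff)
  then show "Re (2 * a + 2 * cs a) = 0" "Im (2 * a + 2 * cs a) \<noteq> 0"
    using assms aux_real[of "Im a"] unfolding cs_def by (auto simp: Re_divide Im_divide field_simps power2_eq_square add_nonneg_eq_0_iff)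
qed


lemma poly_sq_real: fixes c3 :: complex shows "[:1, -c3/2, 1:] * [:1, -c3/2, 1:] = [:1, -c3, c3^2/4 + 2, -c3, 1:]"
  by (simp add: algebra_simps power2_eq_square)

lemma poly_sq_imag: fixes c3 :: complex shows "[:-1, -c3/2, 1:] * [:-1, -c3/2, 1:] = [:1, c3, c3^2/4 - 2, -c3, 1:]"
  by (simp add: algebra_simps power2_eq_square)

lemma prod_list_mset_cong: "mset xs = mset ys \<Longrightarrow> prod_list (map f xs) = prod_list (map (f :: _ \<Rightarrow> 'b :: comm_monoid_mult) ys)"
  by (metis mset_map prod_mset_prod_list)

lemma sum_list_mset_cong: "mset xs = mset ys \<Longrightarrow> sum_list (map f xs) = sum_list (map (f :: _ \<Rightarrow> 'b :: comm_monoid_add) ys)"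
  by (metis mset_map sum_mset_sum_list)

lemma norm_ne1_cs: "r \<noteq> 0 \<Longrightarrow> norm r \<noteq> 1 \<Longrightarrow> r \<noteq> cs r"
proof
  assume z: "r \<noteq> 0" and n: "norm r \<noteq> 1" and r: "r = cs r"
  from arg_cong[OF r, of norm] have e: "norm r = inverse (norm r)" unfolding norm_cs .
  have nz: "norm r \<noteq> 0" using z by simp
  have "norm r * norm r = norm r * inverse (norm r)" using e by (metis)
  also have "\<dots> = 1" using nz by simp
  finally have "(norm r)^2 = 1" by (simp add: power2_eq_square)
  then have "norm r = 1" using norm_ge_zero[of r] by (simp add: power2_eq_1_iff)
  with n show False by simp
qed

theorem theorem1p6:
  fixes A :: "complex mat" and c1 c2 c3 :: complex
  assumes SL: "A \<in> SL_mat 4"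
    and chi: "char_poly A = [:1, -c1, c2, -c3, 1:]"
  shows "(c3 \<noteq> cnj c1 \<or> c2 \<notin> \<real> \<longrightarrow> \<not> c_reciprocal (char_poly A))
    \<and> (c3 = cnj c1 \<and> c2 \<in> \<real> \<longrightarrow>
         ((Bseq (\<lambda>n. mat_trace (A ^\<^sub>m n)) \<longrightarrow> c_reversible 4 A)
        \<and> (\<not> Bseq (\<lambda>n. mat_trace (A ^\<^sub>m n)) \<and> degree (minimal_poly 4 A) \<noteq> 3 \<longrightarrow> c_reversible 4 A)
        \<and> (\<not> Bseq (\<lambda>n. mat_trace (A ^\<^sub>m n)) \<and> degree (minimal_poly 4 A) = 3 \<longrightarrow>
             (Re (mat_trace A) \<noteq> 0 \<and> Im (mat_trace A) \<noteq> 0 \<longrightarrow> c_reversible 4 A)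
           \<and> (mat_trace A \<in> \<real> \<longrightarrow> (c_reversible 4 A \<longleftrightarrow> c2 \<noteq> c3\<^sup>2 / 4 + 2))
           \<and> (Re (mat_trace A) = 0 \<and> Im (mat_trace A) \<noteq> 0 \<longrightarrow> (c_reversible 4 A \<longleftrightarrow> c2 \<noteq> c3\<^sup>2 / 4 - 2)))))"
proof -
  from SL have Ac: "A \<in> carrier_mat 4 4" unfolding SL_mat_def by auto
  from char_poly_factorized[OF Ac] obtain as where cp: "char_poly A = (\<Prod>r\<leftarrow>as. [:- r, 1:])" 
    and len: "length as = 4" by auto
  from jordan_nf_exists[OF Ac cp] obtain n_as where jnf: "jordan_nf A n_as" ..
  interpret F: four_mat A as n_as by (unfold_locales, rule Ac, rule cp, rule len, rule jnf)
  have pe: "(\<Prod>r\<leftarrow>as. [:- r, 1:]) = [:1, -c1, c2, -c3, 1:]" using cp chi by simp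
  have trk: "mat_trace (A ^\<^sub>m k) = sum_list (map (\<lambda> r. r ^ k) as)" for k
    by (rule trace_pow_roots[OF Ac cp])
  have sumas: "sum_list as = c3"
  proof -
    from length4[OF len] obtain r1 r2 r3 r4 where as: "as = [r1,r2,r3,r4]" by auto
    from pe[unfolded as prod4] have "-(r1+r2+r3+r4) = -c3" by (simp only: pCons_eq_iff)
    then show ?thesis unfolding as by (simp add: algebra_simps)
  qed
  have A1: "A ^\<^sub>m 1 = A" using Ac by simp
  have tr1: "mat_trace A = c3" using trk[of 1] unfolding A1 sumas[symmetric] by simp
  have T: "(\<lambda>n. mat_trace (A ^\<^sub>m n)) = (\<lambda> k. sum_list (map (\<lambda> r. r ^ k) as))" using trk by auto
  have part1: "c3 \<noteq> cnj c1 \<or> c2 \<notin> \<real> \<longrightarrow> \<not> c_reciprocal (char_poly A)"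
    using c_reciprocal_imp[OF pe len] chi by auto
  have part2: "(Bseq (\<lambda>n. mat_trace (A ^\<^sub>m n)) \<longrightarrow> c_reversible 4 A)
        \<and> (\<not> Bseq (\<lambda>n. mat_trace (A ^\<^sub>m n)) \<and> degree (minimal_poly 4 A) \<noteq> 3 \<longrightarrow> c_reversible 4 A)
        \<and> (\<not> Bseq (\<lambda>n. mat_trace (A ^\<^sub>m n)) \<and> degree (minimal_poly 4 A) = 3 \<longrightarrow>
             (Re (mat_trace A) \<noteq> 0 \<and> Im (mat_trace A) \<noteq> 0 \<longrightarrow> c_reversible 4 A)
           \<and> (mat_trace A \<in> \<real> \<longrightarrow> (c_reversible 4 A \<longleftrightarrow> c2 \<noteq> c3\<^sup>2 / 4 + 2))
           \<and> (Re (mat_trace A) = 0 \<and> Im (mat_trace A) \<noteq> 0 \<longrightarrow> (c_reversible 4 A \<longleftrightarrow> c2 \<noteq> c3\<^sup>2 / 4 - 2)))"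
    if sym: "c3 = cnj c1" "c2 \<in> \<real>"
  proof -
    have cnt: "count (mset as) (cs z) = count (mset as) z" for z by (rule order_cs_sym[OF pe len sym])
    have rev: "c_reversible 4 A \<longleftrightarrow> (\<forall> mu k. dim_gen_eigenspace A mu k = dim_gen_eigenspace A (cs mu) k)"
      by (rule rev_iff[OF SL])
    have bad: "\<exists> a. a \<noteq> cs a \<and> mset as = {#a,a,cs a,cs a#} \<and> dim_gen_eigenspace A a 1 \<noteq> dim_gen_eigenspace A (cs a) 1"
      if nr: "\<not> c_reversible 4 A"
    proof -
      from nr rev obtain mu k where ne: "dim_gen_eigenspace A mu k \<noteq> dim_gen_eigenspace A (cs mu) k" by auto
      let ?m = "count (mset as) mu"
      have cm: "count (mset as) (cs mu) = ?m" by (rule cnt)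
      have mu: "mu \<noteq> cs mu" using ne by metis
      have k0: "k \<noteq> 0" using ne dge_zero[OF jnf] by metis
      have km: "\<not> ?m \<le> k"
      proof
        assume "?m \<le> k"
        then have "dim_gen_eigenspace A mu k = ?m" "dim_gen_eigenspace A (cs mu) k = ?m"
          using dge_big[OF jnf, of mu k] dge_big[OF jnf, of "cs mu" k] cm unfolding F.ordc by auto
        with ne show False by simp
      qed
      have "?m + ?m \<le> 4" using count_two_le[OF mu, of as] cm len by simp
      then have m2: "?m = 2" and k1: "k = 1" using k0 km by auto
      have ms: "mset as = {#mu,mu,cs mu,cs mu#}" by (rule mset2[OF mu], insert m2 cm len, auto)
      show ?thesis using mu ms ne k1 by auto
    qed
    have badc: "(\<forall> k. mat_trace (A ^\<^sub>m k) = 2 * a ^ k + 2 * cs a ^ k) \<and> c3 = 2 * a + 2 * cs a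
      \<and> c2 = c3^2 / 4 + 2 * (a * cs a) \<and> (a * cs a)^2 = 1"
      if ms: "mset as = {#a,a,cs a,cs a#}" for a
    proof -
      let ?b = "cs a"
      have ms': "mset as = mset [a,a,?b,?b]" using ms by simp
      have "(\<Prod>r\<leftarrow>as. [:- r, 1:]) = (\<Prod>r\<leftarrow>[a,a,?b,?b]. [:- r, 1:])" 
        by (rule prod_list_mset_cong[OF ms'])
      from this[unfolded pe prod4] have "a*a*?b*?b = 1 \<and> a*a*?b+a*a*?b+a*?b*?b+a*?b*?b = c1 \<and>
        a*a+a*?b+a*?b+a*?b+a*?b+?b*?b = c2 \<and> a+a+?b+?b = c3" 
        by (simp only: pCons_eq_iff neg_equal_iff_equal simp_thms)
      then have e: "a*a*?b*?b = 1" "a*a+a*?b+a*?b+a*?b+a*?b+?b*?b = c2" "a+a+?b+?b = c3" by auto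
      have "sum_list (map (\<lambda> r. r ^ k) as) = sum_list (map (\<lambda> r. r ^ k) [a,a,?b,?b])" for k
        by (rule sum_list_mset_cong[OF ms'])
      then have "mat_trace (A ^\<^sub>m k) = 2 * a ^ k + 2 * ?b ^ k" for k unfolding trk by simp
      moreover have "c3 = 2 * a + 2 * ?b" unfolding e(3)[symmetric] by (simp add: algebra_simps)
      moreover have "c2 = c3^2 / 4 + 2 * (a * ?b)" unfolding e(2,3)[symmetric] 
        by (simp add: algebra_simps power2_eq_square)
      moreover have "(a * ?b)^2 = 1" using e(1) by (simp add: power2_eq_square algebra_simps)
      ultimately show ?thesis by auto
    qed
    have sq: "\<exists> r. r \<noteq> cs r \<and> mset as = {#r,r,cs r,cs r#}" 
      if q: "q * q = (\<Prod>r\<leftarrow>as. [:- r, 1:])" and nb: "\<not> Bseq (\<lambda>n. mat_trace (A ^\<^sub>m n))" for q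
    proof -
      have "\<exists> r \<in> set as. norm r \<noteq> 1"
      proof (rule ccontr)
        assume "\<not> ?thesis"
        then have "Bseq (\<lambda> k. sum_list (map (\<lambda> r. r ^ k) as))" by (intro bounded_circle, auto)
        with nb show False unfolding T by simp
      qed
      then obtain r where r: "r \<in> set as" and nr: "norm r \<noteq> 1" by auto
      have r0: "r \<noteq> 0"
      proof
        assume "r = 0"
        with r have "poly (\<Prod>r\<leftarrow>as. [:- r, 1:]) 0 = 0" by (auto simp: poly_prod_list_zero_iff)
        then show False unfolding pe by simp
      qed
      have rr: "r \<noteq> cs r" by (rule norm_ne1_cs[OF r0 nr])
      have q0: "q \<noteq> 0" using q F.cp0 cp by auto
      have "poly (q * q) r = 0" unfolding q using r by (auto simp: poly_prod_list_zero_iff)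
      then have "poly q r = 0" by simp
      then have "Polynomial.order r q \<ge> 1" using q0 order_root by (metis less_one not_le)
      moreover have "Polynomial.order r (q * q) = Polynomial.order r q + Polynomial.order r q"
        by (rule order_mult, insert q0, auto)
      ultimately have "count (mset as) r \<ge> 2" unfolding F.ordc[symmetric] cp q[symmetric] by auto
      moreover have "count (mset as) r + count (mset as) (cs r) \<le> 4" using count_two_le[OF rr, of as] len by simp
      ultimately have "count (mset as) r = 2" "count (mset as) (cs r) = 2" using cnt[of r] by auto
      from mset2[OF rr this len] rr show ?thesis by auto
    qed
    have a0: "a \<noteq> 0" if "a \<noteq> cs a" for a using that by auto
    have badc2: "c3 = 2 * a + 2 * cs a \<and> ((a * cs a = 1 \<and> Im a = 0 \<and> c2 = c3^2 / 4 + 2) \<or> (a * cs a = -1 \<and> Re a = 0 \<and> c2 = c3^2 / 4 - 2))"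
      if ms: "mset as = {#a,a,cs a,cs a#}" for a
    proof -
      from badc[OF ms] have c3: "c3 = 2 * a + 2 * cs a" and c2: "c2 = c3^2 / 4 + 2 * (a * cs a)" 
        and ab: "(a * cs a)^2 = 1" by blast+
      from ab_cases[OF ab] c2 c3 show ?thesis by auto
    qed
    have P1: "Bseq (\<lambda>n. mat_trace (A ^\<^sub>m n)) \<longrightarrow> c_reversible 4 A"
    proof (intro impI, rule ccontr)
      assume b: "Bseq (\<lambda>n. mat_trace (A ^\<^sub>m n))" and "\<not> c_reversible 4 A"
      from bad[OF this(2)] obtain a where a: "a \<noteq> cs a" and ms: "mset as = {#a,a,cs a,cs a#}" by blast
      from badc[OF ms] have "\<forall> k. mat_trace (A ^\<^sub>m k) = 2 * a ^ k + 2 * cs a ^ k" by blast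
      then have "(\<lambda>n. mat_trace (A ^\<^sub>m n)) = (\<lambda>k. 2 * a ^ k + 2 * cs a ^ k)" by (intro ext, blast)
      with b unbounded_two[OF a] show False by simp
    qed
    have P2: "\<not> Bseq (\<lambda>n. mat_trace (A ^\<^sub>m n)) \<and> degree (minimal_poly 4 A) \<noteq> 3 \<longrightarrow> c_reversible 4 A"
    proof (intro impI, rule ccontr)
      assume d: "\<not> Bseq (\<lambda>n. mat_trace (A ^\<^sub>m n)) \<and> degree (minimal_poly 4 A) \<noteq> 3" and "\<not> c_reversible 4 A"
      from bad[OF this(2)] obtain a where a: "a \<noteq> cs a" and ms: "mset as = {#a,a,cs a,cs a#}" 
        and dd: "dim_gen_eigenspace A a 1 \<noteq> dim_gen_eigenspace A (cs a) 1" by blast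
      from F.deg_eq[OF ms a] dd d show False by simp
    qed
    have P3: "(Re (mat_trace A) \<noteq> 0 \<and> Im (mat_trace A) \<noteq> 0 \<longrightarrow> c_reversible 4 A)
           \<and> (mat_trace A \<in> \<real> \<longrightarrow> (c_reversible 4 A \<longleftrightarrow> c2 \<noteq> c3\<^sup>2 / 4 + 2))
           \<and> (Re (mat_trace A) = 0 \<and> Im (mat_trace A) \<noteq> 0 \<longrightarrow> (c_reversible 4 A \<longleftrightarrow> c2 \<noteq> c3\<^sup>2 / 4 - 2))"
      if nb: "\<not> Bseq (\<lambda>n. mat_trace (A ^\<^sub>m n))" and d: "degree (minimal_poly 4 A) = 3"
    proof -
      have sq_case: "c_reversible 4 A \<Longrightarrow> q * q = (\<Prod>r\<leftarrow>as. [:- r, 1:]) \<Longrightarrow> False" for q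
      proof -
        assume rv: "c_reversible 4 A" and q: "q * q = (\<Prod>r\<leftarrow>as. [:- r, 1:])"
        from sq[OF q nb] obtain r where rr: "r \<noteq> cs r" and ms: "mset as = {#r,r,cs r,cs r#}" by blast
        from rv rev have "dim_gen_eigenspace A r 1 = dim_gen_eigenspace A (cs r) 1" by blast
        with F.deg_eq[OF ms rr] d show False by simp
      qed
      have Q1: "Re (mat_trace A) \<noteq> 0 \<and> Im (mat_trace A) \<noteq> 0 \<longrightarrow> c_reversible 4 A"
      proof (intro impI, rule ccontr)
        assume tr: "Re (mat_trace A) \<noteq> 0 \<and> Im (mat_trace A) \<noteq> 0" and "\<not> c_reversible 4 A"
        from bad[OF this(2)] obtain a where a: "a \<noteq> cs a" and ms: "mset as = {#a,a,cs a,cs a#}" by blast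
        from badc2[OF ms] have c3: "c3 = 2 * a + 2 * cs a" and cases: "Im a = 0 \<or> Re a = 0" by blast+
        from cases show False
        proof
          assume "Im a = 0"
          from tr_real_case[OF this a0[OF a]] tr tr1 c3 show False by simp
        next
          assume "Re a = 0"
          from tr_imag_case(1)[OF this a0[OF a]] tr tr1 c3 show False by simp
        qed
      qed
      have Q2: "mat_trace A \<in> \<real> \<longrightarrow> (c_reversible 4 A \<longleftrightarrow> c2 \<noteq> c3\<^sup>2 / 4 + 2)"
      proof (intro impI iffI)
        assume real: "mat_trace A \<in> \<real>" and rv: "c_reversible 4 A"
        show "c2 \<noteq> c3\<^sup>2 / 4 + 2"
        proof
          assume c2: "c2 = c3\<^sup>2 / 4 + 2"
          have "cnj c3 = c3" using real tr1 by (simp add: Reals_cnj_iff)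
          then have c1: "c1 = c3" using sym(1) by (metis complex_cnj_cnj)
          show False by (rule sq_case[OF rv, of "[:1, -c3/2, 1:]"], unfold poly_sq_real pe c1 c2, simp)
        qed
      next
        assume real: "mat_trace A \<in> \<real>" and c2: "c2 \<noteq> c3\<^sup>2 / 4 + 2"
        show "c_reversible 4 A"
        proof (rule ccontr)
          assume "\<not> c_reversible 4 A"
          from bad[OF this] obtain a where a: "a \<noteq> cs a" and ms: "mset as = {#a,a,cs a,cs a#}" by blast
          from badc2[OF ms] c2 have c3: "c3 = 2 * a + 2 * cs a" and ra: "Re a = 0" by blast+
          have "Im (mat_trace A) = 0" using real by (simp add: complex_is_Real_iff)
          with tr_imag_case(2)[OF ra a0[OF a]] tr1 c3 show False by simp
        qed
      qed
      have Q3: "Re (mat_trace A) = 0 \<and> Im (mat_trace A) \<noteq> 0 \<longrightarrow> (c_reversible 4 A \<longleftrightarrow> c2 \<noteq> c3\<^sup>2 / 4 - 2)"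
      proof (intro impI iffI)
        assume im: "Re (mat_trace A) = 0 \<and> Im (mat_trace A) \<noteq> 0" and rv: "c_reversible 4 A"
        show "c2 \<noteq> c3\<^sup>2 / 4 - 2"
        proof
          assume c2: "c2 = c3\<^sup>2 / 4 - 2"
          have "cnj c3 = - c3" using im tr1 by (simp add: complex_eq_iff)
          then have c1: "c1 = - c3" using sym(1) by (metis complex_cnj_cnj complex_cnj_minus)
          show False by (rule sq_case[OF rv, of "[:-1, -c3/2, 1:]"], unfold poly_sq_imag pe c1 c2, simp)
        qed
      next
        assume im: "Re (mat_trace A) = 0 \<and> Im (mat_trace A) \<noteq> 0" and c2: "c2 \<noteq> c3\<^sup>2 / 4 - 2"
        show "c_reversible 4 A"
        proof (rule ccontr)
          assume "\<not> c_reversible 4 A"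
          from bad[OF this] obtain a where a: "a \<noteq> cs a" and ms: "mset as = {#a,a,cs a,cs a#}" by blast
          from badc2[OF ms] c2 have c3: "c3 = 2 * a + 2 * cs a" and ia: "Im a = 0" by blast+
          from tr_real_case[OF ia a0[OF a]] im tr1 c3 show False by simp
        qed
      qed
      from Q1 Q2 Q3 show ?thesis by blast
    qed
    from P1 P2 P3 show ?thesis by blast
  qed
  show ?thesis
    apply (rule conjI[OF part1])
    apply (rule impI)
    apply (erule conjE)
    apply (rule part2)
    apply assumption+
    done
qed

end
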